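(* Let $A$ be an abelian variety of dimension $g\ge1$ over a finite field $\mathbb F_q$. Suppose that $P_A(T)$ has cycle types $(2g)$ and $(2,1,1,\ldots,1)$, and that $Q_A(T)$ has cycle type $\sigma$ for every partition $\sigma$ of $g$. Then $\operatorname{Gal}(P_A(T))\cong W_{2g}$.
   Context: $P_A(T)\in\mathbb Z[T]$ is the unique polynomial of degree $2g$ such that the isogeny $r-\pi_A$ has degree $P_A(r)$ for all $r\in\mathbb Z$, where $\pi_A$ is the $q$-power Frobenius endomorphism of $A$; it satisfies $P_A(q/T)/(q/T)^g=P_A(T)/T^g$. $Q_A(T)\in\mathbb Z[T]$ is the unique polynomial with $P_A(T)=T^gQ_A(T+q/T)$. $W_{2g}$ is the group of permutations of $\{1,\ldots,2g\}$ that permute the set of pairs $\{\{1,2\},\ldots,\{2g-1,2g\}\}$. For $f\in\mathbb Z[T]$ of degree $n$, $\operatorname{Gal}(f)$ is the Galois group over $\mathbb Q$ of its splitting field; a partition $\sigma=(\sigma_1,\ldots,\sigma_k)$ of $n$ ($\sigma_1\ge\cdots\ge\sigma_k\ge1$, $\sum\sigma_i=n$) is a cycle type of $f$ if $f$ is separable and the image of $\operatorname{Gal}(f)$ in the symmetric group $\mathfrak S_n$ (via a numbering of the roots) contains a permutation whose disjoint cycle lengths are $\sigma_1,\ldots,\sigma_k$. *)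

theory Defs
  imports Complex_Main "HOL-Computational_Algebra.Polynomial" "HOL-Library.Multiset"
    "HOL-Combinatorics.Permutations"
begin

definition croots :: "int poly \<Rightarrow> complex set" where
  "croots f = {z. poly (map_poly of_int f) z = 0}"

definition separable_int :: "int poly \<Rightarrow> bool" where
  "separable_int f \<longleftrightarrow> f \<noteq> 0 \<and> card (croots f) = degree f"

definition subfield :: "complex set \<Rightarrow> bool" where
  "subfield K \<longleftrightarrow> 0 \<in> K \<and> 1 \<in> K \<and>
     (\<forall>x\<in>K. \<forall>y\<in>K. x + y \<in> K \<and> x * y \<in> K) \<and>
     (\<forall>x\<in>K. - x \<in> K \<and> inverse x \<in> K)"

definition splitting_field :: "int poly \<Rightarrow> complex set" where
  "splitting_field f = \<Inter>{K. subfield K \<and> croots f \<subseteq> K}"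

definition gal :: "int poly \<Rightarrow> (complex \<Rightarrow> complex) set" where
  "gal f = {\<sigma>. bij_betw \<sigma> (splitting_field f) (splitting_field f) \<and>
     (\<forall>x\<in>splitting_field f. \<forall>y\<in>splitting_field f.
        \<sigma> (x + y) = \<sigma> x + \<sigma> y \<and> \<sigma> (x * y) = \<sigma> x * \<sigma> y) \<and>
     (\<forall>x. x \<notin> splitting_field f \<longrightarrow> \<sigma> x = x)}"

definition orbit_of :: "('a \<Rightarrow> 'a) \<Rightarrow> 'a \<Rightarrow> 'a set" where
  "orbit_of \<sigma> x = {(\<sigma> ^^ k) x | k. True}"

definition cycle_type_on :: "('a \<Rightarrow> 'a) \<Rightarrow> 'a set \<Rightarrow> nat multiset" where
  "cycle_type_on \<sigma> S = image_mset card (mset_set {orbit_of \<sigma> x | x. x \<in> S})"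

definition is_partition :: "nat \<Rightarrow> nat multiset \<Rightarrow> bool" where
  "is_partition n lam \<longleftrightarrow> (\<forall>i\<in>#lam. 0 < i) \<and> sum_mset lam = n"

(* lam is a cycle type of f: f separable and some element of Gal(f) permutes the roots
   with cycle lengths lam (numbering of roots is irrelevant) *)
definition has_cycle_type :: "int poly \<Rightarrow> nat multiset \<Rightarrow> bool" where
  "has_cycle_type f lam \<longleftrightarrow> separable_int f \<and>
     (\<exists>\<sigma>\<in>gal f. cycle_type_on \<sigma> (croots f) = lam)"

definition pairs2 :: "nat \<Rightarrow> nat set set" where
  "pairs2 g = {{2*k - 1, 2*k} | k. 1 \<le> k \<and> k \<le> g}"

definition W :: "nat \<Rightarrow> (nat \<Rightarrow> nat) set" where
  "W g = {\<pi>. \<pi> permutes {1..2*g} \<and> (\<forall>p\<in>pairs2 g. \<pi> ` p \<in> pairs2 g)}"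

definition group_iso_fun :: "('a \<Rightarrow> 'a) set \<Rightarrow> ('b \<Rightarrow> 'b) set \<Rightarrow> bool" where
  "group_iso_fun G H \<longleftrightarrow> (\<exists>\<phi>. bij_betw \<phi> G H \<and>
     (\<forall>\<sigma>\<in>G. \<forall>\<tau>\<in>G. \<phi> (\<sigma> \<circ> \<tau>) = \<phi> \<sigma> \<circ> \<phi> \<tau>))"

end

theory Submission
  imports Defs
begin

definition hom_on :: "complex set \<Rightarrow> (complex \<Rightarrow> complex) \<Rightarrow> bool" where
  "hom_on F \<phi> \<longleftrightarrow> inj_on \<phi> F \<and> (\<forall>x\<in>F. \<forall>y\<in>F. \<phi> (x+y) = \<phi> x + \<phi> y \<and> \<phi> (x*y) = \<phi> x * \<phi> y) \<and> \<phi> 1 = 1"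

lemma subfield_UNIV: "subfield UNIV" by (simp add: subfield_def)

lemma subfieldD:
  assumes "subfield K"
  shows "0 \<in> K" "1 \<in> K" "x \<in> K \<Longrightarrow> y \<in> K \<Longrightarrow> x + y \<in> K" "x \<in> K \<Longrightarrow> y \<in> K \<Longrightarrow> x * y \<in> K"
    "x \<in> K \<Longrightarrow> -x \<in> K" "x \<in> K \<Longrightarrow> inverse x \<in> K"
  using assms by (auto simp: subfield_def)

lemma subfield_diff: "subfield K \<Longrightarrow> x \<in> K \<Longrightarrow> y \<in> K \<Longrightarrow> x - y \<in> K"
  by (metis diff_conv_add_uminus subfieldD(3,5))

lemma subfield_divide: "subfield K \<Longrightarrow> x \<in> K \<Longrightarrow> y \<in> K \<Longrightarrow> x / y \<in> K"
  by (simp add: divide_inverse subfieldD(4,6))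

lemma subfield_power: "subfield K \<Longrightarrow> x \<in> K \<Longrightarrow> x ^ n \<in> K"
  by (induction n) (auto intro: subfieldD)

lemma subfield_of_nat: "subfield K \<Longrightarrow> of_nat n \<in> K"
  by (induction n) (auto intro: subfieldD)

lemma of_int_split: "(of_int n :: complex) = of_nat (nat n) - of_nat (nat (-n))"
  by (cases "n \<ge> 0") auto

lemma subfield_of_int: "subfield K \<Longrightarrow> of_int n \<in> K"
  by (subst of_int_split) (auto intro: subfield_diff subfield_of_nat)

lemma subfield_sum: "finite A \<Longrightarrow> subfield K \<Longrightarrow> (\<And>i. i \<in> A \<Longrightarrow> f i \<in> K) \<Longrightarrow> sum f A \<in> K"
  by (induction A rule: finite_induct) (auto intro: subfieldD)

lemma subfield_Inter: "\<forall>K\<in>S. subfield K \<Longrightarrow> subfield (\<Inter>S)"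
  unfolding subfield_def by blast

lemma split_subfield: "subfield (splitting_field f)"
  unfolding splitting_field_def by (rule subfield_Inter) auto

lemma croots_split: "croots f \<subseteq> splitting_field f"
  unfolding splitting_field_def by auto

lemma split_min: "subfield K \<Longrightarrow> croots f \<subseteq> K \<Longrightarrow> splitting_field f \<subseteq> K"
  unfolding splitting_field_def by auto

context
  fixes F \<phi>
  assumes sf: "subfield F" and h: "hom_on F \<phi>"
begin

lemma hom_add: "x \<in> F \<Longrightarrow> y \<in> F \<Longrightarrow> \<phi> (x+y) = \<phi> x + \<phi> y"
  using h by (auto simp: hom_on_def)
lemma hom_mult: "x \<in> F \<Longrightarrow> y \<in> F \<Longrightarrow> \<phi> (x*y) = \<phi> x * \<phi> y"
  using h by (auto simp: hom_on_def)
lemma hom_one: "\<phi> 1 = 1"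
  using h by (auto simp: hom_on_def)
lemma hom_inj: "x \<in> F \<Longrightarrow> y \<in> F \<Longrightarrow> \<phi> x = \<phi> y \<Longrightarrow> x = y"
  using h by (auto simp: hom_on_def inj_on_def)
lemma hom_zero: "\<phi> 0 = 0"
  using hom_add[of 0 0] subfieldD(1)[OF sf] by simp
lemma hom_uminus: "x \<in> F \<Longrightarrow> \<phi> (-x) = - \<phi> x"
  using hom_add[of x "-x"] subfieldD(5)[OF sf] hom_zero
  by (simp add: eq_neg_iff_add_eq_0 add.commute)
lemma hom_diff: "x \<in> F \<Longrightarrow> y \<in> F \<Longrightarrow> \<phi> (x-y) = \<phi> x - \<phi> y"
  using hom_add[of x "-y"] hom_uminus[of y] subfieldD(5)[OF sf] by simp
lemma hom_nz: "x \<in> F \<Longrightarrow> x \<noteq> 0 \<Longrightarrow> \<phi> x \<noteq> 0"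
  using hom_inj[of x 0] hom_zero subfieldD(1)[OF sf] by auto
lemma hom_inverse: "x \<in> F \<Longrightarrow> \<phi> (inverse x) = inverse (\<phi> x)"
proof (cases "x = 0")
  case True thus ?thesis using hom_zero by simp
next
  case False
  assume x: "x \<in> F"
  have "\<phi> x * \<phi> (inverse x) = 1" using hom_mult[of x "inverse x"] x subfieldD(6)[OF sf x] False hom_one by simp
  thus ?thesis by (metis inverse_unique)
qed
lemma hom_divide: "x \<in> F \<Longrightarrow> y \<in> F \<Longrightarrow> \<phi> (x/y) = \<phi> x / \<phi> y"
  by (simp add: divide_inverse hom_mult hom_inverse subfieldD(6)[OF sf])
lemma hom_power: "x \<in> F \<Longrightarrow> \<phi> (x^n) = \<phi> x ^ n"
  by (induction n) (auto simp: hom_one hom_mult subfield_power[OF sf])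
lemma hom_of_nat: "\<phi> (of_nat n) = of_nat n"
  by (induction n) (auto simp: hom_one hom_add subfield_of_nat[OF sf] subfieldD(2)[OF sf] hom_zero)
lemma hom_of_int: "\<phi> (of_int n) = of_int n"
  using hom_diff[OF subfield_of_nat[OF sf] subfield_of_nat[OF sf], of "nat n" "nat (-n)"]
  by (simp only: hom_of_nat flip: of_int_split)
lemma hom_sum: "finite A \<Longrightarrow> (\<And>i. i \<in> A \<Longrightarrow> f i \<in> F) \<Longrightarrow> \<phi> (sum f A) = (\<Sum>i\<in>A. \<phi> (f i))"
  by (induction A rule: finite_induct) (auto simp: hom_zero hom_add subfield_sum[OF _ sf])
lemma hom_poly: "z \<in> F \<Longrightarrow> \<phi> (poly (map_poly of_int p) z) = poly (map_poly of_int p) (\<phi> z)"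
proof -
  assume z: "z \<in> F"
  have "\<phi> (poly (map_poly of_int p) z) = \<phi> (\<Sum>i\<le>degree p. of_int (coeff p i) * z ^ i)"
    by (simp add: poly_altdef coeff_map_poly degree_map_poly)
  also have "\<dots> = (\<Sum>i\<le>degree p. of_int (coeff p i) * \<phi> z ^ i)"
    by (subst hom_sum) (auto intro!: subfieldD(4)[OF sf] subfield_of_int[OF sf] subfield_power[OF sf] z sum.cong
        simp: hom_mult[OF subfield_of_int[OF sf] subfield_power[OF sf z]] hom_of_int hom_power[OF z])
  also have "\<dots> = poly (map_poly of_int p) (\<phi> z)"
    by (simp add: poly_altdef coeff_map_poly degree_map_poly)
  finally show ?thesis .
qed

lemma hom_image_subfield: "subfield (\<phi> ` F)"
  unfolding subfield_def
proof (intro conjI ballI)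
  show "0 \<in> \<phi> ` F" using hom_zero subfieldD(1)[OF sf] by (metis image_eqI)
  show "1 \<in> \<phi> ` F" using hom_one subfieldD(2)[OF sf] by (metis image_eqI)
  fix x y assume "x \<in> \<phi> ` F" "y \<in> \<phi> ` F"
  then obtain a b where a: "a \<in> F" "x = \<phi> a" and b: "b \<in> F" "y = \<phi> b" by auto
  show "x + y \<in> \<phi> ` F" using a b hom_add subfieldD(3)[OF sf] by (metis image_eqI)
  show "x * y \<in> \<phi> ` F" using a b hom_mult subfieldD(4)[OF sf] by (metis image_eqI)
next
  fix x assume "x \<in> \<phi> ` F"
  then obtain a where a: "a \<in> F" "x = \<phi> a" by auto
  show "- x \<in> \<phi> ` F" using a hom_uminus subfieldD(5)[OF sf] by (metis image_eqI)
  show "inverse x \<in> \<phi> ` F" using a hom_inverse subfieldD(6)[OF sf] by (metis image_eqI)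
qed

end

lemma galD:
  assumes "\<sigma> \<in> gal f"
  shows "bij_betw \<sigma> (splitting_field f) (splitting_field f)"
    "x \<in> splitting_field f \<Longrightarrow> y \<in> splitting_field f \<Longrightarrow> \<sigma> (x + y) = \<sigma> x + \<sigma> y"
    "x \<in> splitting_field f \<Longrightarrow> y \<in> splitting_field f \<Longrightarrow> \<sigma> (x * y) = \<sigma> x * \<sigma> y"
    "x \<notin> splitting_field f \<Longrightarrow> \<sigma> x = x"
  using assms by (auto simp: gal_def)

lemma gal_hom:
  assumes s: "\<sigma> \<in> gal f"
  shows "hom_on (splitting_field f) \<sigma>"
proof -
  let ?L = "splitting_field f"
  have sf: "subfield ?L" by (rule split_subfield)
  have z: "\<sigma> 0 = 0" using galD(2)[OF s, of 0 0] subfieldD(1)[OF sf] by simp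
  have "\<sigma> 1 = \<sigma> 1 * \<sigma> 1" using galD(3)[OF s, of 1 1] subfieldD(2)[OF sf] by simp
  moreover have "\<sigma> 1 \<noteq> 0" using z galD(1)[OF s] subfieldD(1,2)[OF sf]
    by (metis bij_betw_def inj_onD zero_neq_one)
  ultimately have "\<sigma> 1 = 1" by (metis mult_cancel_left2)
  thus ?thesis using galD[OF s] by (auto simp: hom_on_def bij_betw_def)
qed

lemma croots_finite: "f \<noteq> 0 \<Longrightarrow> finite (croots f)"
  unfolding croots_def
  by (rule poly_roots_finite) (simp add: map_poly_eq_0_iff)
  
lemma gal_croots:
  assumes s: "\<sigma> \<in> gal f" and f: "f \<noteq> 0"
  shows "bij_betw \<sigma> (croots f) (croots f)"
proof -
  let ?L = "splitting_field f"
  have h: "hom_on ?L \<sigma>" by (rule gal_hom[OF s])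
  have sub: "\<sigma> ` croots f \<subseteq> croots f"
  proof
    fix y assume "y \<in> \<sigma> ` croots f"
    then obtain x where x: "x \<in> croots f" "y = \<sigma> x" by auto
    have xL: "x \<in> ?L" using x croots_split by auto
    have "poly (map_poly of_int f) y = \<sigma> (poly (map_poly of_int f) x)"
      using hom_poly[OF split_subfield h xL] x by simp
    also have "\<dots> = 0" using x hom_zero[OF split_subfield h] by (simp add: croots_def)
    finally show "y \<in> croots f" by (simp add: croots_def)
  qed
  have inj: "inj_on \<sigma> (croots f)" using h croots_split unfolding hom_on_def
    by (meson inj_on_subset)
  have "\<sigma> ` croots f = croots f" by (rule endo_inj_surj[OF croots_finite[OF f] sub inj])
  thus ?thesis using inj by (simp add: bij_betw_def)
qed

lemma gal_id: "id \<in> gal f"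
  by (simp add: gal_def)

lemma gal_comp:
  assumes s: "\<sigma> \<in> gal f" and t: "\<tau> \<in> gal f"
  shows "\<sigma> \<circ> \<tau> \<in> gal f"
proof -
  let ?L = "splitting_field f"
  have b: "bij_betw (\<sigma> \<circ> \<tau>) ?L ?L" using galD(1)[OF s] galD(1)[OF t] by (rule bij_betw_trans[rotated])
  have "\<tau> x \<in> ?L" if "x \<in> ?L" for x using galD(1)[OF t] that bij_betwE by blast
  thus ?thesis unfolding gal_def using b galD[OF s] galD[OF t] split_subfield
    by (auto simp: subfieldD)
qed

lemma gal_inv:
  assumes s: "\<sigma> \<in> gal f"
  shows "\<exists>\<sigma>'\<in>gal f. \<forall>x. \<sigma>' (\<sigma> x) = x \<and> \<sigma> (\<sigma>' x) = x"
proof -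
  let ?L = "splitting_field f"
  have sf: "subfield ?L" by (rule split_subfield)
  have b: "bij_betw \<sigma> ?L ?L" by (rule galD(1)[OF s])
  define \<sigma>' where "\<sigma>' x = (if x \<in> ?L then inv_into ?L \<sigma> x else x)" for x
  have b': "bij_betw \<sigma>' ?L ?L" using bij_betw_inv_into[OF b]
    by (simp add: \<sigma>'_def cong: bij_betw_cong)
  have i1: "\<sigma>' (\<sigma> x) = x" for x
  proof (cases "x \<in> ?L")
    case True thus ?thesis using b by (auto simp: \<sigma>'_def bij_betw_def bij_betwE)
  next
    case False thus ?thesis using galD(4)[OF s] by (auto simp: \<sigma>'_def)
  qed
  have i2: "\<sigma> (\<sigma>' x) = x" for x
    using b galD(4)[OF s] by (auto simp: \<sigma>'_def bij_betw_def f_inv_into_f)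
  have "\<sigma>' \<in> gal f" unfolding gal_def
  proof (intro CollectI conjI b' ballI allI impI)
    fix x y assume x: "x \<in> ?L" and y: "y \<in> ?L"
    obtain a where a: "a \<in> ?L" "x = \<sigma> a" using b x by (metis bij_betw_def imageE)
    obtain c where c: "c \<in> ?L" "y = \<sigma> c" using b y by (metis bij_betw_def imageE)
    show "\<sigma>' (x + y) = \<sigma>' x + \<sigma>' y" using a c galD(2)[OF s a(1) c(1)] i1 by metis
    show "\<sigma>' (x * y) = \<sigma>' x * \<sigma>' y" using a c galD(3)[OF s a(1) c(1)] i1 by metis
  next
    fix x assume "x \<notin> ?L" thus "\<sigma>' x = x" by (simp add: \<sigma>'_def)
  qed
  thus ?thesis using i1 i2 by blast
qed

lemma gal_eq:
  assumes s: "\<sigma> \<in> gal f" and t: "\<tau> \<in> gal f" and eq: "\<forall>x\<in>croots f. \<sigma> x = \<tau> x"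
  shows "\<sigma> = \<tau>"
proof
  fix x
  let ?L = "splitting_field f"
  let ?E = "{x\<in>?L. \<sigma> x = \<tau> x}"
  have sf: "subfield ?L" by (rule split_subfield)
  have hs: "hom_on ?L \<sigma>" and ht: "hom_on ?L \<tau>" using gal_hom s t by auto
  have "subfield ?E" unfolding subfield_def
    using sf hom_zero[OF sf hs] hom_zero[OF sf ht] hom_one[OF sf hs] hom_one[OF sf ht]
      hom_add[OF sf hs] hom_add[OF sf ht] hom_mult[OF sf hs] hom_mult[OF sf ht]
      hom_uminus[OF sf hs] hom_uminus[OF sf ht] hom_inverse[OF sf hs] hom_inverse[OF sf ht]
    by (auto simp: subfieldD)
  moreover have "croots f \<subseteq> ?E" using eq croots_split by auto
  ultimately have "?L \<subseteq> ?E" by (rule split_min)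
  thus "\<sigma> x = \<tau> x" using galD(4)[OF s] galD(4)[OF t] by (cases "x \<in> ?L") auto
qed

context
  fixes \<sigma> :: "'a \<Rightarrow> 'a" and S :: "'a set"
  assumes bij: "bij_betw \<sigma> S S" and fin: "finite S"
begin

lemma funpow_in: "x \<in> S \<Longrightarrow> (\<sigma> ^^ k) x \<in> S"
  by (induction k) (use bij in \<open>auto simp: bij_betwE\<close>)

lemma orbit_sub: "x \<in> S \<Longrightarrow> orbit_of \<sigma> x \<subseteq> S"
  by (auto simp: orbit_of_def funpow_in)

lemma orbit_self: "x \<in> orbit_of \<sigma> x"
  unfolding orbit_of_def by (auto intro: exI[of _ 0])

lemma funpow_inj: "x \<in> S \<Longrightarrow> y \<in> S \<Longrightarrow> (\<sigma> ^^ k) x = (\<sigma> ^^ k) y \<Longrightarrow> x = y"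
proof (induction k arbitrary: x y)
  case (Suc k)
  have "\<sigma> ((\<sigma> ^^ k) x) = \<sigma> ((\<sigma> ^^ k) y)" using Suc.prems by simp
  hence "(\<sigma> ^^ k) x = (\<sigma> ^^ k) y" using bij funpow_in Suc.prems
    by (metis bij_betw_def inj_onD)
  thus ?case using Suc by blast
qed simp

lemma fpa: "(\<sigma> ^^ (m + n)) x = (\<sigma> ^^ m) ((\<sigma> ^^ n) x)"
  by (simp add: funpow_add)

lemma period: "x \<in> S \<Longrightarrow> \<exists>p>0. (\<sigma> ^^ p) x = x"
proof -
  assume x: "x \<in> S"
  have "\<not> inj_on (\<lambda>k. (\<sigma> ^^ k) x) UNIV"
  proof
    assume "inj_on (\<lambda>k. (\<sigma> ^^ k) x) UNIV"
    moreover have "(\<lambda>k. (\<sigma> ^^ k) x) ` UNIV \<subseteq> S" using funpow_in x by auto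
    ultimately have "finite (UNIV :: nat set)" using fin inj_on_finite by blast
    thus False by simp
  qed
  then obtain i j where ij: "i \<noteq> j" "(\<sigma> ^^ i) x = (\<sigma> ^^ j) x" unfolding inj_on_def by auto
  have "\<exists>i j. i < j \<and> (\<sigma> ^^ i) x = (\<sigma> ^^ j) x"
  proof (cases "i < j")
    case True thus ?thesis using ij by blast
  next
    case False hence "j < i" using ij(1) by simp
    thus ?thesis using ij(2) by metis
  qed
  then obtain i j where ij: "i < j" "(\<sigma> ^^ i) x = (\<sigma> ^^ j) x" by blast
  have "(\<sigma> ^^ i) ((\<sigma> ^^ (j - i)) x) = (\<sigma> ^^ i) x"
    using ij fpa[of i "j - i" x] by simp
  hence "(\<sigma> ^^ (j - i)) x = x" using funpow_inj funpow_in x by blast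
  thus ?thesis using ij by (intro exI[of _ "j - i"]) auto
qed

lemma funpow_mult_period: "(\<sigma> ^^ p) x = x \<Longrightarrow> (\<sigma> ^^ (p * m)) x = x"
  by (induction m) (auto simp: funpow_add)

lemma orbit_mem_eq:
  assumes x: "x \<in> S" and y: "y \<in> orbit_of \<sigma> x"
  shows "orbit_of \<sigma> y = orbit_of \<sigma> x"
proof -
  obtain k where k: "y = (\<sigma> ^^ k) x" using y by (auto simp: orbit_of_def)
  obtain p where p: "p > 0" "(\<sigma> ^^ p) x = x" using period x by blast
  have pk: "(\<sigma> ^^ (p * k)) x = x" by (rule funpow_mult_period[OF p(2)])
  have kle: "k \<le> p * k" using p by simp
  have bk: "(\<sigma> ^^ (p * k - k)) y = x"
    using pk kle fpa[of "p * k - k" k x] by (simp add: k)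
  show ?thesis
  proof
    show "orbit_of \<sigma> y \<subseteq> orbit_of \<sigma> x"
    proof
      fix z assume "z \<in> orbit_of \<sigma> y"
      then obtain j where "z = (\<sigma> ^^ j) y" by (auto simp: orbit_of_def)
      hence "z = (\<sigma> ^^ (j + k)) x" using fpa[of j k x] by (simp add: k)
      thus "z \<in> orbit_of \<sigma> x" by (auto simp: orbit_of_def)
    qed
    show "orbit_of \<sigma> x \<subseteq> orbit_of \<sigma> y"
    proof
      fix z assume "z \<in> orbit_of \<sigma> x"
      then obtain j where "z = (\<sigma> ^^ j) x" by (auto simp: orbit_of_def)
      hence "z = (\<sigma> ^^ (j + (p * k - k))) y" using bk fpa[of j "p * k - k" y] by simp
      thus "z \<in> orbit_of \<sigma> y" by (auto simp: orbit_of_def)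
    qed
  qed
qed

lemma orbit_eq_or_disj:
  assumes "x \<in> S" "y \<in> S" "z \<in> orbit_of \<sigma> x" "z \<in> orbit_of \<sigma> y"
  shows "orbit_of \<sigma> x = orbit_of \<sigma> y"
  using orbit_mem_eq assms by metis

lemma orbit_reach: "x \<in> S \<Longrightarrow> y \<in> orbit_of \<sigma> x \<Longrightarrow> \<exists>k. (\<sigma> ^^ k) x = y"
  by (auto simp: orbit_of_def)

definition "Orbs = {orbit_of \<sigma> x | x. x \<in> S}"

lemma Orbs_finite: "finite Orbs"
  unfolding Orbs_def using fin by simp

lemma ct_eq: "cycle_type_on \<sigma> S = image_mset card (mset_set Orbs)"
  by (simp add: cycle_type_on_def Orbs_def)

lemma count_ct: "count (cycle_type_on \<sigma> S) n = card {w\<in>Orbs. card w = n}"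
proof -
  have "count (cycle_type_on \<sigma> S) n = (\<Sum>x | x \<in># mset_set Orbs \<and> n = card x. count (mset_set Orbs) x)"
    by (simp add: ct_eq count_image_mset')
  also have "\<dots> = (\<Sum>x | x \<in> Orbs \<and> n = card x. 1)"
    using Orbs_finite by (intro sum.cong) auto
  also have "\<dots> = card {w\<in>Orbs. card w = n}" by (simp add: eq_commute)
  finally show ?thesis .
qed

lemma size_ct: "size (cycle_type_on \<sigma> S) = card Orbs"
  by (simp add: ct_eq Orbs_finite)

lemma orbit_in_Orbs: "x \<in> S \<Longrightarrow> orbit_of \<sigma> x \<in> Orbs"
  by (auto simp: Orbs_def)

lemma Orbs_cases: "w \<in> Orbs \<Longrightarrow> \<exists>x\<in>S. w = orbit_of \<sigma> x"
  by (auto simp: Orbs_def)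

lemma orbit_card1: "x \<in> S \<Longrightarrow> card (orbit_of \<sigma> x) = 1 \<Longrightarrow> \<sigma> x = x"
proof -
  assume "x \<in> S" "card (orbit_of \<sigma> x) = 1"
  hence "orbit_of \<sigma> x = {x}" using orbit_self by (metis card_1_singletonE singletonD)
  moreover have "\<sigma> x \<in> orbit_of \<sigma> x" unfolding orbit_of_def by (auto intro: exI[of _ 1])
  ultimately show ?thesis by simp
qed

lemma ct_full:
  assumes "cycle_type_on \<sigma> S = {#n#}"
  shows "card S = n" "\<forall>x\<in>S. \<forall>y\<in>S. \<exists>k. (\<sigma> ^^ k) x = y"
proof -
  have c1: "card Orbs = 1" using size_ct assms by simp
  then obtain w where w: "Orbs = {w}" using card_1_singletonE by blast
  have all: "orbit_of \<sigma> x = w" if "x \<in> S" for x using orbit_in_Orbs[OF that] w by simp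
  obtain x0 where x0: "x0 \<in> S" "w = orbit_of \<sigma> x0" using Orbs_cases w by blast
  have oS: "w = S" using all orbit_sub x0 orbit_self by blast
  have "cycle_type_on \<sigma> S = {#card w#}" by (simp add: ct_eq w)
  thus "card S = n" using assms oS by simp
  show "\<forall>x\<in>S. \<forall>y\<in>S. \<exists>k. (\<sigma> ^^ k) x = y"
    using all orbit_reach oS by blast
qed

lemma ct_fix:
  assumes "cycle_type_on \<sigma> S = {#m, 1#}"
  shows "\<exists>p\<in>S. \<sigma> p = p \<and> (\<forall>x\<in>S-{p}. \<forall>y\<in>S-{p}. \<exists>k. (\<sigma> ^^ k) x = y)"
proof -
  have c2: "card Orbs = 2" using size_ct assms by simp
  have "1 \<in># cycle_type_on \<sigma> S" using assms by simp
  then obtain w where w: "w \<in> Orbs" "card w = 1" by (auto simp: ct_eq Orbs_finite)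
  obtain p where p: "p \<in> S" "w = orbit_of \<sigma> p" using Orbs_cases w by blast
  have op: "w = {p}" using w p orbit_self by (metis card_1_singletonE singletonD)
  have sp: "\<sigma> p = p" using orbit_card1 w p by simp
  have "\<forall>x\<in>S-{p}. \<forall>y\<in>S-{p}. \<exists>k. (\<sigma> ^^ k) x = y"
  proof (intro ballI)
    fix x y assume x: "x \<in> S - {p}" and y: "y \<in> S - {p}"
    have nx: "orbit_of \<sigma> x \<noteq> w" using x op orbit_self by blast
    have ny: "orbit_of \<sigma> y \<noteq> w" using y op orbit_self by blast
    have "orbit_of \<sigma> x = orbit_of \<sigma> y"
    proof (rule ccontr)
      assume "orbit_of \<sigma> x \<noteq> orbit_of \<sigma> y"
      hence "{w, orbit_of \<sigma> x, orbit_of \<sigma> y} \<subseteq> Orbs" "card {w, orbit_of \<sigma> x, orbit_of \<sigma> y} = 3"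
        using nx ny w orbit_in_Orbs x y by auto
      hence "3 \<le> card Orbs" by (metis card_mono[OF Orbs_finite])
      thus False using c2 by simp
    qed
    thus "\<exists>k. (\<sigma> ^^ k) x = y" using orbit_reach x y orbit_self by blast
  qed
  thus ?thesis using p sp by blast
qed

lemma ct_transp:
  assumes "cycle_type_on \<sigma> S = add_mset 2 (replicate_mset n 1)"
  shows "\<exists>a\<in>S. \<exists>b\<in>S. a \<noteq> b \<and> \<sigma> a = b \<and> \<sigma> b = a \<and> (\<forall>x\<in>S-{a,b}. \<sigma> x = x)"
proof -
  have "2 \<in># cycle_type_on \<sigma> S" using assms by simp
  then obtain w where w: "w \<in> Orbs" "card w = 2" by (auto simp: ct_eq Orbs_finite)
  obtain a where a: "a \<in> S" "w = orbit_of \<sigma> a" using Orbs_cases w by blast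
  have saS: "\<sigma> a \<in> S" using bij a bij_betwE by blast
  have sao: "\<sigma> a \<in> w" unfolding a orbit_of_def by (auto intro: exI[of _ 1])
  have "\<sigma> a \<noteq> a"
  proof
    assume "\<sigma> a = a"
    hence "(\<sigma> ^^ k) a = a" for k by (induction k) auto
    hence "w = {a}" unfolding a orbit_of_def by auto
    thus False using w by simp
  qed
  define b where "b = \<sigma> a"
  have fw: "finite w" using w(2) card_ge_0_finite by force
  have ab2: "card {a, b} = 2" using \<open>\<sigma> a \<noteq> a\<close> b_def by simp
  have "{a, b} \<subseteq> w" using orbit_self a sao b_def by auto
  hence ob: "w = {a, b}" using card_subset_eq[OF fw _ ] ab2 w(2) by metis
  have bS: "b \<in> S" using saS b_def by simp
  have "\<sigma> b \<in> orbit_of \<sigma> b" unfolding orbit_of_def by (auto intro: exI[of _ 1])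
  hence "\<sigma> b \<in> w" using orbit_mem_eq[OF a(1)] a sao b_def by simp
  moreover have "\<sigma> b \<noteq> b"
    using b_def bij a bS \<open>\<sigma> a \<noteq> a\<close> by (metis bij_betw_def inj_onD)
  ultimately have sb: "\<sigma> b = a" using ob by auto
  have "\<forall>x\<in>S-{a,b}. \<sigma> x = x"
  proof
    fix x assume x: "x \<in> S - {a, b}"
    have ne: "orbit_of \<sigma> x \<noteq> w" using x ob orbit_self by blast
    have "card (orbit_of \<sigma> x) \<in># cycle_type_on \<sigma> S"
      using orbit_in_Orbs x by (auto simp: ct_eq Orbs_finite)
    hence "card (orbit_of \<sigma> x) \<in> {1, 2}" using assms by (simp add: in_replicate_mset split: if_splits; blast)
    moreover have "card (orbit_of \<sigma> x) \<noteq> 2"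
    proof
      assume c: "card (orbit_of \<sigma> x) = 2"
      have "{w, orbit_of \<sigma> x} \<subseteq> {w\<in>Orbs. card w = 2}" using c w orbit_in_Orbs x by auto
      moreover have "card {w, orbit_of \<sigma> x} = 2" using ne by simp
      moreover have "finite {w\<in>Orbs. card w = 2}" using Orbs_finite by simp
      ultimately have "2 \<le> card {w\<in>Orbs. card w = 2}" by (metis card_mono)
      moreover have "count (cycle_type_on \<sigma> S) 2 = 1" using assms by simp
      ultimately show False using count_ct by simp
    qed
    ultimately show "\<sigma> x = x" using orbit_card1 x by auto
  qed
  thus ?thesis using a bS \<open>\<sigma> a \<noteq> a\<close> b_def sb by blast
qed

end

lemma transpose_inj:
  assumes "inj_on k S" "x \<in> S" "y \<in> S" "w \<in> S"
  shows "k (Transposition.transpose x y w) = Transposition.transpose (k x) (k y) (k w)"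
proof -
  have "k w = k x \<longleftrightarrow> w = x" "k w = k y \<longleftrightarrow> w = y" using assms inj_onD by metis+
  thus ?thesis unfolding transpose_def by auto
qed

lemma transpose3:
  assumes "x \<noteq> y" "y \<noteq> z" "x \<noteq> z"
  shows "Transposition.transpose x y (Transposition.transpose y z (Transposition.transpose x y w)) = Transposition.transpose x z w"
  using assms unfolding transpose_def by auto

context
  fixes G :: "('a \<Rightarrow> 'a) set" and S :: "'a set"
  assumes fin: "finite S"
    and perm: "\<forall>h\<in>G. bij_betw h S S"
    and comp: "\<forall>h\<in>G. \<forall>k\<in>G. h \<circ> k \<in> G"
    and inv: "\<forall>h\<in>G. \<exists>h'\<in>G. \<forall>x\<in>S. h' (h x) = x"
begin

definition "RT x y \<longleftrightarrow> (\<exists>h\<in>G. \<forall>z\<in>S. h z = Transposition.transpose x y z)"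

lemma inS: "h \<in> G \<Longrightarrow> x \<in> S \<Longrightarrow> h x \<in> S"
  using perm bij_betwE by blast

lemma RT_sym: "RT x y \<Longrightarrow> RT y x"
  unfolding RT_def by (metis transpose_commute)

lemma RT_conj:
  assumes r: "RT x y" and k: "k \<in> G" and x: "x \<in> S" and y: "y \<in> S"
  shows "RT (k x) (k y)"
proof -
  obtain h where h: "h \<in> G" "\<forall>z\<in>S. h z = Transposition.transpose x y z" using r by (auto simp: RT_def)
  obtain k' where k': "k' \<in> G" "\<forall>x\<in>S. k' (k x) = x" using inv k by blast
  have kb: "bij_betw k S S" using perm k by blast
  have kk': "k (k' z) = z" if "z \<in> S" for z
  proof -
    have "z \<in> k ` S" using bij_betw_imp_surj_on[OF kb] that by simp
    then obtain w where "w \<in> S" "z = k w" by blast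
    thus ?thesis using k' by simp
  qed
  have "\<forall>z\<in>S. (k \<circ> h \<circ> k') z = Transposition.transpose (k x) (k y) z"
  proof
    fix z assume z: "z \<in> S"
    have w: "k' z \<in> S" using inS k' z by blast
    have "(k \<circ> h \<circ> k') z = k (Transposition.transpose x y (k' z))" using h w by simp
    also have "\<dots> = Transposition.transpose (k x) (k y) (k (k' z))"
      using transpose_inj[of k S x y "k' z"] kb x y w by (simp add: bij_betw_def)
    also have "\<dots> = Transposition.transpose (k x) (k y) z" using kk' z by simp
    finally show "(k \<circ> h \<circ> k') z = Transposition.transpose (k x) (k y) z" .
  qed
  moreover have "k \<circ> h \<circ> k' \<in> G" using comp k h k' by blast
  ultimately show ?thesis unfolding RT_def by (intro bexI[where x="k \<circ> h \<circ> k'"]) simp_all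
qed

lemma funpow_G: "c \<in> G \<Longrightarrow> k \<ge> 1 \<Longrightarrow> c ^^ k \<in> G"
proof (induction k)
  case (Suc k)
  show ?case
  proof (cases "k = 0")
    case True thus ?thesis using Suc by simp
  next
    case False
    hence "c ^^ k \<in> G" using Suc by simp
    hence "c \<circ> c ^^ k \<in> G" using comp Suc by blast
    thus ?thesis by (simp only: funpow.simps)
  qed
qed simp

lemma RT_funpow:
  assumes "RT x y" "c \<in> G" "x \<in> S" "y \<in> S"
  shows "RT ((c ^^ k) x) ((c ^^ k) y)"
proof (cases "k = 0")
  case True thus ?thesis using assms by simp
next
  case False thus ?thesis using RT_conj[OF assms(1) funpow_G[OF assms(2)] assms(3,4)] by simp
qed

lemma RT_trans:
  assumes "RT x y" "RT y z" "x \<noteq> y" "y \<noteq> z" "x \<noteq> z"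
  shows "RT x z"
proof -
  obtain h1 where h1: "h1 \<in> G" "\<forall>w\<in>S. h1 w = Transposition.transpose x y w" using assms(1) by (auto simp: RT_def)
  obtain h2 where h2: "h2 \<in> G" "\<forall>w\<in>S. h2 w = Transposition.transpose y z w" using assms(2) by (auto simp: RT_def)
  have "h1 \<circ> h2 \<circ> h1 \<in> G" using comp h1 h2 by blast
  moreover have "\<forall>w\<in>S. (h1 \<circ> h2 \<circ> h1) w = Transposition.transpose x z w"
  proof
    fix w assume w: "w \<in> S"
    have a: "h1 w \<in> S" using inS h1 w by blast
    have b: "h2 (h1 w) \<in> S" using inS h2 a by blast
    show "(h1 \<circ> h2 \<circ> h1) w = Transposition.transpose x z w"
      using h1 h2 w a b transpose3[OF assms(3-5)] by simp
  qed
  ultimately show ?thesis unfolding RT_def by (intro bexI[where x="h1 \<circ> h2 \<circ> h1"]) simp_all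
qed

lemma all_transp:
  assumes a: "a \<in> S" and b: "b \<in> S" and ab: "a \<noteq> b" and t: "t \<in> G"
    and ta: "\<forall>z\<in>S. t z = Transposition.transpose a b z"
    and c: "c \<in> G" and cyc: "\<forall>x\<in>S. \<forall>y\<in>S. \<exists>k. (c ^^ k) x = y"
    and d: "d \<in> G" and p: "p \<in> S" "d p = p" and dcyc: "\<forall>x\<in>S-{p}. \<forall>y\<in>S-{p}. \<exists>k. (d ^^ k) x = y"
  shows "\<forall>x\<in>S. \<forall>y\<in>S. x \<noteq> y \<longrightarrow> RT x y"
proof -
  have rab: "RT a b" using t ta by (auto simp: RT_def)
  have cb: "bij_betw c S S" using perm c by blast
  have db: "bij_betw d S S" using perm d by blast
  have ex: "\<exists>y\<in>S. y \<noteq> x \<and> RT x y" if x: "x \<in> S" for x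
  proof -
    obtain k where k: "(c ^^ k) a = x" using cyc a x by blast
    have "RT x ((c ^^ k) b)" using RT_funpow[OF rab c a b, of k] k by simp
    moreover have "(c ^^ k) b \<noteq> x" using funpow_inj[OF cb fin a b] k ab by metis
    moreover have "(c ^^ k) b \<in> S" using funpow_in[OF cb fin b] .
    ultimately show ?thesis by blast
  qed
  obtain y0 where y0: "y0 \<in> S" "y0 \<noteq> p" "RT p y0" using ex p by blast
  have dp: "(d ^^ k) p = p" for k by (induction k) (use p in auto)
  have rp: "RT p z" if z: "z \<in> S" "z \<noteq> p" for z
  proof -
    obtain k where k: "(d ^^ k) y0 = z" using dcyc y0 z by blast
    show ?thesis using RT_funpow[OF y0(3) d p(1) y0(1), of k] k dp by simp
  qed
  show ?thesis
  proof (intro ballI impI)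
    fix x y assume x: "x \<in> S" and y: "y \<in> S" and xy: "x \<noteq> y"
    show "RT x y"
    proof (cases "x = p")
      case True thus ?thesis using rp y xy by simp
    next
      case False note xp = this
      show ?thesis
      proof (cases "y = p")
        case True thus ?thesis using rp[OF x xp] RT_sym by simp
      next
        case False
        thus ?thesis using RT_trans[OF RT_sym[OF rp[OF x xp]] rp[OF y False]] xp xy False by auto
      qed
    qed
  qed
qed

end

definition adj :: "complex set \<Rightarrow> complex \<Rightarrow> complex set" where
  "adj F z = {a + b * z | a b. a \<in> F \<and> b \<in> F}"

lemma adjI: "a \<in> F \<Longrightarrow> b \<in> F \<Longrightarrow> a + b * z \<in> adj F z"
  unfolding adj_def by blast

lemma adjE: "x \<in> adj F z \<Longrightarrow> (\<And>a b. x = a + b * z \<Longrightarrow> a \<in> F \<Longrightarrow> b \<in> F \<Longrightarrow> P) \<Longrightarrow> P"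
  unfolding adj_def by blast

lemma adj_sup: "subfield F \<Longrightarrow> F \<subseteq> adj F z"
  using adjI[of _ F 0 z] subfieldD(1) by fastforce

lemma adj_gen: "subfield F \<Longrightarrow> z \<in> adj F z"
  using adjI[of 0 F 1 z] subfieldD(1,2) by fastforce

lemma adj_sub: "subfield L \<Longrightarrow> F \<subseteq> L \<Longrightarrow> z \<in> L \<Longrightarrow> adj F z \<subseteq> L"
  by (auto elim!: adjE simp: subfieldD subset_iff)

lemma adj_in: "subfield F \<Longrightarrow> z \<in> F \<Longrightarrow> adj F z = F"
  using adj_sup adj_sub[of F F z] by blast

lemma quad_factor:
  fixes z v t s :: complex
  assumes "z^2 = t*z - s" "v^2 = t*v - s"
  shows "z = v \<or> z = t - v"
proof -
  have "(z - v) * (z + v - t) = z^2 - t*z - (v^2 - t*v)" by (simp add: algebra_simps power2_eq_square)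
  hence "(z - v) * (z + v - t) = 0" using assms by simp
  thus ?thesis by auto
qed

lemma adj_subfield:
  assumes sf: "subfield F" and t: "t \<in> F" and s: "s \<in> F" and z: "z^2 = t*z - s"
  shows "subfield (adj F z)"
proof (cases "z \<in> F")
  case True thus ?thesis using adj_in sf by simp
next
  case zF: False
  show ?thesis unfolding subfield_def
  proof (intro conjI ballI)
    show "0 \<in> adj F z" "1 \<in> adj F z" using adj_sup sf subfieldD by blast+
  next
    fix x y assume "x \<in> adj F z" "y \<in> adj F z"
    obtain a b where x: "x = a + b*z" "a \<in> F" "b \<in> F" using \<open>x \<in> adj F z\<close> by (rule adjE)
    obtain c d where y: "y = c + d*z" "c \<in> F" "d \<in> F" using \<open>y \<in> adj F z\<close> by (rule adjE)
    have "x + y = (a + c) + (b + d) * z" using x y by (simp add: algebra_simps)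
    thus "x + y \<in> adj F z" using x y sf adjI subfieldD(3) by metis
    have "x * y = a*c + (a*d+b*c)*z + b*d*z^2" by (simp add: x y algebra_simps power2_eq_square)
    also have "\<dots> = (a*c - b*d*s) + (a*d + b*c + b*d*t) * z" unfolding z by (simp add: algebra_simps)
    finally show "x * y \<in> adj F z" using x y sf t s
      by (simp add: adjI subfieldD subfield_diff)
  next
    fix x assume "x \<in> adj F z"
    then obtain a b where x: "x = a + b*z" "a \<in> F" "b \<in> F" by (rule adjE)
    have "- x = (-a) + (-b) * z" using x by simp
    thus "- x \<in> adj F z" using x sf adjI subfieldD(5) by metis
    show "inverse x \<in> adj F z"
    proof (cases "x = 0")
      case True thus ?thesis using adj_sup sf subfieldD by auto
    next
      case False
      define z' where "z' = t - z"
      have nz': "a + b * z' \<noteq> 0"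
      proof
        assume h: "a + b * z' = 0"
        show False
        proof (cases "b = 0")
          case True thus False using h x False by simp
        next
          case False
          hence "z' = - a / b" using h by (simp add: field_simps add_eq_0_iff)
          hence "z = t - (- a / b)" unfolding z'_def by (simp add: algebra_simps)
          moreover have "t - (- a / b) \<in> F" using sf t x by (auto intro: subfield_diff subfield_divide subfieldD)
          ultimately show False using zF by simp
        qed
      qed
      define N where "N = a*a + a*b*t + b*b*s"
      have "x * (a + b * z') = a*a + a*b*t + b*b*(t*z - z^2)" using x unfolding z'_def
        by (simp add: algebra_simps power2_eq_square)
      hence NN: "x * (a + b * z') = N" unfolding N_def z by simp
      hence N0: "N \<noteq> 0" using False nz' by auto
      have "inverse x = (a + b * z') / N" using NN N0 False by (simp add: field_simps)
      also have "\<dots> = ((a + b*t) / N) + (- b / N) * z" using N0 unfolding z'_def by (simp add: field_simps)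
      finally have "inverse x = ((a + b*t) / N) + (- b / N) * z" .
      moreover have "N \<in> F" unfolding N_def using sf x t s by (auto intro!: subfieldD)
      moreover have "(a + b*t) / N \<in> F" "- b / N \<in> F" using sf x t \<open>N \<in> F\<close>
        by (auto intro: subfield_divide subfieldD)
      ultimately show ?thesis using adjI by metis
    qed
  qed
qed

lemma ext_step:
  assumes sf: "subfield F" and h: "hom_on F \<phi>" and t: "t \<in> F" and s: "s \<in> F"
    and z: "z^2 = t*z - s" and w: "w^2 = \<phi> t * w - \<phi> s"
  shows "\<exists>\<phi>'. hom_on (adj F z) \<phi>' \<and> (\<forall>x\<in>F. \<phi>' x = \<phi> x) \<and> \<phi>' ` adj F z = adj (\<phi> ` F) w"
proof (cases "z \<in> F")
  case True
  have sfi: "subfield (\<phi> ` F)" by (rule hom_image_subfield[OF sf h])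
  have "(\<phi> z)^2 = \<phi> t * \<phi> z - \<phi> s"
    using z True t s by (simp add: hom_power[OF sf h, symmetric] hom_mult[OF sf h] hom_diff[OF sf h] subfieldD(4)[OF sf])
  hence "w = \<phi> z \<or> w = \<phi> t - \<phi> z" using quad_factor w by blast
  hence "w \<in> \<phi> ` F" using True t sfi by (auto intro: subfield_diff)
  hence "adj (\<phi> ` F) w = \<phi> ` F" using adj_in sfi by simp
  thus ?thesis using h adj_in[OF sf True] by auto
next
  case zF: False
  have uniq: "a = c \<and> b = d" if "a \<in> F" "b \<in> F" "c \<in> F" "d \<in> F" "a + b*z = c + d*z" for a b c d
  proof (cases "b = d")
    case True thus ?thesis using that by simp
  next
    case False
    hence "z = (a - c) / (d - b)" using that(5) by (simp add: field_simps)
    moreover have "(a - c) / (d - b) \<in> F" using that sf by (auto intro: subfield_diff subfield_divide)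
    ultimately show ?thesis using zF by simp
  qed
  have wF: "w \<notin> \<phi> ` F"
  proof
    assume "w \<in> \<phi> ` F"
    then obtain v where v: "v \<in> F" "w = \<phi> v" by auto
    have "\<phi> (v^2 - (t*v - s)) = w^2 - (\<phi> t * w - \<phi> s)"
      using v t s sf by (simp add: hom_power[OF sf h] hom_mult[OF sf h] hom_diff[OF sf h] subfield_diff subfield_power subfieldD(4))
    also have "\<dots> = \<phi> 0" using w hom_zero[OF sf h] by simp
    finally have "v^2 - (t*v - s) = 0"
      using hom_inj[OF sf h] v t s sf by (meson subfieldD subfield_diff subfield_power)
    hence "v^2 = t*v - s" by simp
    hence "z = v \<or> z = t - v" using quad_factor z by blast
    thus False using zF v t sf by (auto intro: subfield_diff)
  qed
  define \<phi>' where "\<phi>' x = (SOME u. \<exists>a b. a \<in> F \<and> b \<in> F \<and> x = a + b*z \<and> u = \<phi> a + \<phi> b * w)" for x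
  have eq: "\<phi>' (a + b*z) = \<phi> a + \<phi> b * w" if "a \<in> F" "b \<in> F" for a b
  proof -
    have "\<exists>u. \<exists>a' b'. a' \<in> F \<and> b' \<in> F \<and> a + b*z = a' + b'*z \<and> u = \<phi> a' + \<phi> b' * w" using that by blast
    hence "\<exists>a' b'. a' \<in> F \<and> b' \<in> F \<and> a + b*z = a' + b'*z \<and> \<phi>' (a + b*z) = \<phi> a' + \<phi> b' * w"
      unfolding \<phi>'_def by (rule someI_ex)
    then obtain a' b' where "a' \<in> F" "b' \<in> F" "a + b*z = a' + b'*z" "\<phi>' (a + b*z) = \<phi> a' + \<phi> b' * w" by blast
    thus ?thesis using uniq[OF that] by metis
  qed
  have ha: "\<phi>' (x + y) = \<phi>' x + \<phi>' y \<and> \<phi>' (x * y) = \<phi>' x * \<phi>' y" if xa: "x \<in> adj F z" and ya: "y \<in> adj F z" for x y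
  proof -
    obtain a b where x: "x = a + b*z" "a \<in> F" "b \<in> F" using xa by (rule adjE)
    obtain c d where y: "y = c + d*z" "c \<in> F" "d \<in> F" using ya by (rule adjE)
    have xye: "x + y = (a + c) + (b + d) * z" using x y by (simp add: algebra_simps)
    have "\<phi>' (x + y) = \<phi> (a + c) + \<phi> (b + d) * w"
      unfolding xye by (rule eq) (use sf x y in \<open>auto intro: subfieldD\<close>)
    also have "\<dots> = \<phi>' x + \<phi>' y" using x y eq by (simp add: hom_add[OF sf h] algebra_simps)
    finally have e1: "\<phi>' (x + y) = \<phi>' x + \<phi>' y" .
    have "x * y = a*c + (a*d+b*c)*z + b*d*z^2" by (simp add: x y algebra_simps power2_eq_square)
    also have "\<dots> = (a*c - b*d*s) + (a*d + b*c + b*d*t) * z" unfolding z by (simp add: algebra_simps)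
    finally have xy: "x * y = (a*c - b*d*s) + (a*d + b*c + b*d*t) * z" .
    have m1: "\<phi> (a*c - b*d*s) = \<phi> a * \<phi> c - \<phi> b * \<phi> d * \<phi> s"
      using x y s sf by (simp add: hom_diff[OF sf h] hom_mult[OF sf h] subfieldD)
    have m2: "\<phi> (a*d + b*c + b*d*t) = \<phi> a * \<phi> d + \<phi> b * \<phi> c + \<phi> b * \<phi> d * \<phi> t"
      using x y t sf by (simp add: hom_add[OF sf h] hom_mult[OF sf h] subfieldD)
    have in1: "a*c - b*d*s \<in> F" using x y s sf by (auto intro: subfield_diff subfieldD)
    have in2: "a*d + b*c + b*d*t \<in> F" using x y t sf by (auto intro: subfieldD)
    have "\<phi>' (x * y) = \<phi> (a*c - b*d*s) + \<phi> (a*d + b*c + b*d*t) * w"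
      using xy eq[OF in1 in2] by simp
    also have "\<dots> = \<phi> a * \<phi> c + (\<phi> a * \<phi> d + \<phi> b * \<phi> c) * w + \<phi> b * \<phi> d * (\<phi> t * w - \<phi> s)"
      unfolding m1 m2 by (simp add: algebra_simps)
    also have "\<dots> = \<phi> a * \<phi> c + (\<phi> a * \<phi> d + \<phi> b * \<phi> c) * w + \<phi> b * \<phi> d * w^2"
      unfolding w ..
    also have "\<dots> = (\<phi> a + \<phi> b * w) * (\<phi> c + \<phi> d * w)"
      by (simp add: algebra_simps power2_eq_square)
    also have "\<dots> = \<phi>' x * \<phi>' y" using x y eq by simp
    finally show ?thesis using e1 by simp
  qed
  have one: "\<phi>' 1 = 1"
    using eq[of 1 0] sf hom_one[OF sf h] hom_zero[OF sf h] by (simp add: subfieldD)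
  have inj: "inj_on \<phi>' (adj F z)"
  proof (rule inj_onI)
    fix x y assume "x \<in> adj F z" "y \<in> adj F z" and e: "\<phi>' x = \<phi>' y"
    obtain a b where x: "x = a + b*z" "a \<in> F" "b \<in> F" using \<open>x \<in> adj F z\<close> by (rule adjE)
    obtain c d where y: "y = c + d*z" "c \<in> F" "d \<in> F" using \<open>y \<in> adj F z\<close> by (rule adjE)
    have e2: "\<phi> a + \<phi> b * w = \<phi> c + \<phi> d * w" using e x y eq by simp
    have bd: "\<phi> b = \<phi> d"
    proof (rule ccontr)
      assume ne: "\<phi> b \<noteq> \<phi> d"
      hence "w = (\<phi> a - \<phi> c) / (\<phi> d - \<phi> b)" using e2 by (simp add: field_simps)
      also have "\<dots> = \<phi> ((a - c) / (d - b))" using x y sf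
        by (simp add: hom_divide[OF sf h] hom_diff[OF sf h] subfield_diff)
      finally show False using wF x y sf by (auto intro: subfield_diff subfield_divide)
    qed
    hence "b = d" using hom_inj[OF sf h] x y by blast
    moreover have "a = c" using e2 bd hom_inj[OF sf h] x y by simp
    ultimately show "x = y" using x y by simp
  qed
  have img: "\<phi>' ` adj F z = adj (\<phi> ` F) w"
  proof
    show "\<phi>' ` adj F z \<subseteq> adj (\<phi> ` F) w" using eq by (auto elim!: adjE intro!: adjI)
    show "adj (\<phi> ` F) w \<subseteq> \<phi>' ` adj F z"
    proof
      fix u assume "u \<in> adj (\<phi> ` F) w"
      then obtain a' b' where "u = a' + b' * w" "a' \<in> \<phi> ` F" "b' \<in> \<phi> ` F" by (rule adjE)
      then obtain a b where "a \<in> F" "b \<in> F" "u = \<phi> a + \<phi> b * w" by blast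
      hence "u = \<phi>' (a + b*z)" "a + b*z \<in> adj F z" using eq adjI by auto
      thus "u \<in> \<phi>' ` adj F z" by blast
    qed
  qed
  have ext: "\<forall>x\<in>F. \<phi>' x = \<phi> x"
    using eq[of _ 0] sf hom_zero[OF sf h] by (simp add: subfieldD)
  show ?thesis using ha one inj img ext unfolding hom_on_def by blast
qed

lemma quad_exists: "\<exists>w::complex. w^2 = u*w - c"
proof -
  define w where "w = (u + csqrt (u^2 - 4*c)) / 2"
  have "2*w - u = csqrt (u^2 - 4*c)" unfolding w_def by (simp add: field_simps)
  hence "(2*w - u)^2 = u^2 - 4*c" by simp
  hence "4 * (w^2 - (u*w - c)) = 0" by (simp add: algebra_simps power2_eq_square)
  hence "w^2 - (u*w - c) = 0" by (simp only: mult_eq_0_iff) simp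
  hence "w^2 = u*w - c" by simp
  thus ?thesis by blast
qed

fun adjl :: "complex set \<Rightarrow> complex list \<Rightarrow> complex set" where
  "adjl F [] = F" | "adjl F (z # zs) = adjl (adj F z) zs"

lemma adj_sup': "0 \<in> F \<Longrightarrow> F \<subseteq> adj F z"
  using adjI[of _ F 0 z] by fastforce

lemma adjl_sup: "0 \<in> F \<Longrightarrow> F \<subseteq> adjl F zs"
proof (induction zs arbitrary: F)
  case (Cons z zs)
  have "0 \<in> adj F z" using adj_sup' Cons.prems by blast
  thus ?case using Cons adj_sup'[OF Cons.prems, of z] by auto
qed simp

lemma adjl_gen: "0 \<in> F \<Longrightarrow> 1 \<in> F \<Longrightarrow> set zs \<subseteq> adjl F zs"
proof (induction zs arbitrary: F)
  case (Cons z zs)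
  have a: "0 \<in> adj F z" "1 \<in> adj F z" using adj_sup' Cons.prems by blast+
  have "z \<in> adj F z" using adjI[of 0 F 1 z] Cons.prems by simp
  hence "z \<in> adjl (adj F z) zs" using adjl_sup a by blast
  thus ?case using Cons.IH[OF a] by simp
qed simp

lemma adjl_sub: "subfield L \<Longrightarrow> F \<subseteq> L \<Longrightarrow> set zs \<subseteq> L \<Longrightarrow> adjl F zs \<subseteq> L"
proof (induction zs arbitrary: F)
  case (Cons z zs)
  thus ?case using adj_sub[of L F z] by simp
qed simp

lemma ext_chain:
  assumes "\<forall>z\<in>set zs. z \<noteq> 0 \<and> z + c/z \<in> K"
    and "subfield F" "K \<subseteq> F" "hom_on F \<phi>" "\<forall>x\<in>K. \<phi> x = \<tau> x" "c \<in> K" "\<tau> c = c"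
  shows "\<exists>\<phi>' ws. hom_on (adjl F zs) \<phi>' \<and> (\<forall>x\<in>F. \<phi>' x = \<phi> x) \<and> \<phi>' ` adjl F zs = adjl (\<phi> ` F) ws
     \<and> (\<forall>w\<in>set ws. \<exists>z\<in>set zs. w^2 = \<tau> (z + c/z) * w - c)
     \<and> (\<forall>z\<in>set zs. \<exists>w\<in>set ws. w^2 = \<tau> (z + c/z) * w - c) \<and> subfield (adjl F zs)"
  using assms
proof (induction zs arbitrary: F \<phi>)
  case Nil
  show ?case using Nil by (intro exI[of _ \<phi>] exI[of _ "[]"]) auto
next
  case (Cons z zs)
  define t where "t = z + c/z"
  have z0: "z \<noteq> 0" and tK: "t \<in> K" using Cons.prems(1) t_def by auto
  have tF: "t \<in> F" and cF: "c \<in> F" using tK Cons.prems(3,6) by auto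
  have zq: "z^2 = t*z - c" using z0 unfolding t_def by (simp add: field_simps power2_eq_square)
  obtain w where w: "w^2 = \<phi> t * w - \<phi> c" using quad_exists by blast
  have pt: "\<phi> t = \<tau> t" and pc: "\<phi> c = c" using Cons.prems(5,6,7) tK by auto
  obtain \<phi>1 where p1: "hom_on (adj F z) \<phi>1" "\<forall>x\<in>F. \<phi>1 x = \<phi> x" "\<phi>1 ` adj F z = adj (\<phi> ` F) w"
    using ext_step[OF Cons.prems(2,4) tF cF zq w] by blast
  have sf1: "subfield (adj F z)" by (rule adj_subfield[OF Cons.prems(2) tF cF zq])
  have K1: "K \<subseteq> adj F z" using Cons.prems(3) adj_sup[OF Cons.prems(2)] by blast
  have a1: "\<forall>x\<in>K. \<phi>1 x = \<tau> x" using Cons.prems(3,5) p1(2) by auto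
  obtain \<phi>' ws where IH: "hom_on (adjl (adj F z) zs) \<phi>'" "\<forall>x\<in>adj F z. \<phi>' x = \<phi>1 x"
    "\<phi>' ` adjl (adj F z) zs = adjl (\<phi>1 ` adj F z) ws"
    "\<forall>w\<in>set ws. \<exists>z\<in>set zs. w^2 = \<tau> (z + c/z) * w - c"
    "\<forall>z\<in>set zs. \<exists>w\<in>set ws. w^2 = \<tau> (z + c/z) * w - c" "subfield (adjl (adj F z) zs)"
    using Cons.IH[OF _ sf1 K1 p1(1) a1 Cons.prems(6,7)] Cons.prems(1) by auto
  have ww: "w^2 = \<tau> (z + c/z) * w - c" using w pt pc t_def by simp
  show ?case
  proof (intro exI[of _ \<phi>'] exI[of _ "w # ws"] conjI)
    show "hom_on (adjl F (z # zs)) \<phi>'" using IH(1) by simp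
    show "\<forall>x\<in>F. \<phi>' x = \<phi> x" using IH(2) p1(2) adj_sup[OF Cons.prems(2), of z] by auto
    show "\<phi>' ` adjl F (z # zs) = adjl (\<phi> ` F) (w # ws)" using IH(3) p1(3) by simp
    show "\<forall>w'\<in>set (w # ws). \<exists>z'\<in>set (z # zs). w'^2 = \<tau> (z' + c/z') * w' - c" using IH(4) ww by auto
    show "\<forall>z'\<in>set (z # zs). \<exists>w'\<in>set (w # ws). w'^2 = \<tau> (z' + c/z') * w' - c" using IH(5) ww by auto
    show "subfield (adjl F (z # zs))" using IH(6) by simp
  qed
qed

locale gsetup =
  fixes P Q :: "int poly" and q g :: nat
  assumes q0: "q > 0" and P0: "P \<noteq> 0" and Q0: "Q \<noteq> 0"
    and noz: "0 \<notin> croots P"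
    and PQ: "\<forall>x::complex. x \<noteq> 0 \<longrightarrow>
               poly (map_poly of_int P) x = x ^ g * poly (map_poly of_int Q) (x + of_nat q / x)"
begin

abbreviation "cq \<equiv> (of_nat q :: complex)"
definition "fz z = z + cq / z"

lemma cq0: "cq \<noteq> 0" using q0 by simp

lemma rootP: "z \<in> croots P \<longleftrightarrow> z \<noteq> 0 \<and> fz z \<in> croots Q"
proof (cases "z = 0")
  case True thus ?thesis using noz by simp
next
  case False thus ?thesis using PQ by (simp add: croots_def fz_def)
qed

lemma fiber: "t \<in> croots Q \<Longrightarrow> \<exists>z\<in>croots P. fz z = t"
proof -
  assume t: "t \<in> croots Q"
  obtain z where z: "z^2 = t*z - cq" using quad_exists by blast
  have z0: "z \<noteq> 0" using z cq0 by auto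
  have "fz z = t" using z z0 unfolding fz_def by (simp add: field_simps power2_eq_square)
  thus ?thesis using rootP t z0 by auto
qed

lemma partner: "z \<in> croots P \<Longrightarrow> cq / z \<in> croots P \<and> fz (cq / z) = fz z \<and> cq / (cq / z) = z \<and> cq / z \<noteq> 0"
proof -
  assume z: "z \<in> croots P"
  hence z0: "z \<noteq> 0" using rootP by blast
  have a: "cq / (cq / z) = z" using cq0 by simp
  have b: "cq / z \<noteq> 0" using cq0 z0 by simp
  have c: "fz (cq / z) = fz z" unfolding fz_def using a by simp
  show ?thesis using a b c z rootP by simp
qed

lemma fz_quad: "z \<noteq> 0 \<Longrightarrow> z^2 = fz z * z - cq"
  unfolding fz_def by (simp add: field_simps power2_eq_square)

lemma fib2: "z \<in> croots P \<Longrightarrow> r \<in> croots P \<Longrightarrow> fz r = fz z \<Longrightarrow> r = z \<or> r = cq / z"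
proof -
  assume z: "z \<in> croots P" and r: "r \<in> croots P" and e: "fz r = fz z"
  have "r^2 = fz z * r - cq" "z^2 = fz z * z - cq" using fz_quad rootP z r e by auto
  hence "r = z \<or> r = fz z - z" using quad_factor by blast
  moreover have "fz z - z = cq / z" unfolding fz_def by simp
  ultimately show ?thesis by simp
qed

lemma T_L: "croots Q \<subseteq> splitting_field P"
proof
  fix t assume "t \<in> croots Q"
  then obtain z where z: "z \<in> croots P" "fz z = t" using fiber by blast
  have "z \<in> splitting_field P" "cq / z \<in> splitting_field P" using z partner croots_split by blast+
  thus "t \<in> splitting_field P" using z(2) split_subfield subfieldD(3) unfolding fz_def by metis
qed

lemma K_L: "splitting_field Q \<subseteq> splitting_field P"
  by (rule split_min[OF split_subfield T_L])

lemma cq_in: "subfield F \<Longrightarrow> cq \<in> F" by (rule subfield_of_nat)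

lemma extend:
  assumes tau: "\<tau> \<in> gal Q"
  shows "\<exists>\<sigma>\<in>gal P. \<forall>t\<in>croots Q. \<sigma> t = \<tau> t"
proof -
  let ?L = "splitting_field P" and ?K = "splitting_field Q"
  have sL: "subfield ?L" and sK: "subfield ?K" by (rule split_subfield)+
  have hK: "hom_on ?K \<tau>" by (rule gal_hom[OF tau])
  have bK: "bij_betw \<tau> ?K ?K" by (rule galD(1)[OF tau])
  have bT: "bij_betw \<tau> (croots Q) (croots Q)" by (rule gal_croots[OF tau Q0])
  obtain zs where zs: "set zs = croots P" using finite_list[OF croots_finite[OF P0]] by blast
  have czs: "\<forall>z\<in>set zs. z \<noteq> 0 \<and> z + cq/z \<in> ?K"
    using zs rootP croots_split unfolding fz_def by blast
  have tc: "\<tau> cq = cq" using hom_of_nat[OF sK hK] .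
  have triv: "\<forall>x\<in>?K. \<tau> x = \<tau> x" by simp
  obtain \<phi> ws where ch: "hom_on (adjl ?K zs) \<phi>" "\<forall>x\<in>?K. \<phi> x = \<tau> x" "\<phi> ` adjl ?K zs = adjl (\<tau> ` ?K) ws"
     "\<forall>w\<in>set ws. \<exists>z\<in>set zs. w^2 = \<tau> (z + cq/z) * w - cq"
     "\<forall>z\<in>set zs. \<exists>w\<in>set ws. w^2 = \<tau> (z + cq/z) * w - cq" "subfield (adjl ?K zs)"
    using ext_chain[OF czs sK subset_refl hK triv cq_in[OF sK] tc] by blast
  have tK: "\<tau> ` ?K = ?K" using bK by (simp add: bij_betw_def)
  have L1: "adjl ?K zs = ?L"
  proof
    show "adjl ?K zs \<subseteq> ?L" using adjl_sub[OF sL K_L] zs croots_split by blast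
    show "?L \<subseteq> adjl ?K zs"
      using split_min[OF ch(6)] adjl_gen[of ?K zs] subfieldD(1,2)[OF sK] zs by blast
  qed
  have wsR: "set ws \<subseteq> croots P"
  proof
    fix w assume "w \<in> set ws"
    then obtain z where z: "z \<in> set zs" "w^2 = \<tau> (fz z) * w - cq" using ch(4) unfolding fz_def by blast
    have tz: "\<tau> (fz z) \<in> croots Q" using bT z zs rootP bij_betwE by blast
    have w0: "w \<noteq> 0" using z(2) cq0 by auto
    have "fz w = \<tau> (fz z)" using z(2) w0 unfolding fz_def by (simp add: field_simps power2_eq_square)
    thus "w \<in> croots P" using rootP w0 tz by simp
  qed
  have L2: "adjl ?K ws = ?L"
  proof
    show "adjl ?K ws \<subseteq> ?L" using adjl_sub[OF sL K_L] wsR croots_split by blast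
    have sub2: "subfield (adjl ?K ws)" using hom_image_subfield[OF ch(6) ch(1)] ch(3) tK by simp
    have "croots P \<subseteq> adjl ?K ws"
    proof
      fix r assume r: "r \<in> croots P"
      define u where "u = fz r"
      have u: "u \<in> croots Q" using r rootP u_def by simp
      then obtain t where t: "t \<in> croots Q" "u = \<tau> t" using bT by (metis bij_betw_def imageE)
      obtain z where z: "z \<in> croots P" "fz z = t" using fiber t(1) by blast
      obtain w where w: "w \<in> set ws" "w^2 = u * w - cq" using ch(5) z zs t unfolding fz_def by blast
      have "r^2 = u * r - cq" using fz_quad rootP r u_def by simp
      hence "r = w \<or> r = u - w" using quad_factor w(2) by blast
      moreover have "w \<in> adjl ?K ws" using adjl_gen[of ?K ws] subfieldD(1,2)[OF sK] w by blast
      moreover have "u \<in> adjl ?K ws" using adjl_sup[of ?K ws] subfieldD(1)[OF sK] u croots_split by blast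
      ultimately show "r \<in> adjl ?K ws" using sub2 subfield_diff by blast
    qed
    thus "?L \<subseteq> adjl ?K ws" using split_min[OF sub2] by blast
  qed
  define \<sigma> where "\<sigma> x = (if x \<in> ?L then \<phi> x else x)" for x
  have hL: "hom_on ?L \<phi>" using ch(1) L1 by simp
  have imL: "\<phi> ` ?L = ?L" using ch(3) L1 L2 tK by simp
  have "\<sigma> \<in> gal P" unfolding gal_def
  proof (intro CollectI conjI ballI allI impI)
    show "bij_betw \<sigma> ?L ?L" using hL imL unfolding bij_betw_def hom_on_def
      by (simp add: \<sigma>_def cong: inj_on_cong image_cong)
  next
    fix x y assume "x \<in> ?L" "y \<in> ?L"
    thus "\<sigma> (x + y) = \<sigma> x + \<sigma> y" "\<sigma> (x * y) = \<sigma> x * \<sigma> y"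
      using hom_add[OF sL hL] hom_mult[OF sL hL] subfieldD(3,4)[OF sL] by (auto simp: \<sigma>_def)
  next
    fix x assume "x \<notin> ?L" thus "\<sigma> x = x" by (simp add: \<sigma>_def)
  qed
  moreover have "\<forall>t\<in>croots Q. \<sigma> t = \<tau> t" using T_L ch(2) croots_split by (auto simp: \<sigma>_def)
  ultimately show ?thesis by blast
qed

lemma gal_partner:
  assumes s: "\<sigma> \<in> gal P" and z: "z \<in> croots P"
  shows "\<sigma> (cq / z) = cq / \<sigma> z" "\<sigma> (fz z) = fz (\<sigma> z)"
proof -
  have sL: "subfield (splitting_field P)" by (rule split_subfield)
  have h: "hom_on (splitting_field P) \<sigma>" by (rule gal_hom[OF s])
  have zL: "z \<in> splitting_field P" using z croots_split by blast
  show a: "\<sigma> (cq / z) = cq / \<sigma> z"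
    using hom_divide[OF sL h cq_in[OF sL] zL] hom_of_nat[OF sL h] by simp
  show "\<sigma> (fz z) = fz (\<sigma> z)" unfolding fz_def
    using hom_add[OF sL h zL subfield_divide[OF sL cq_in[OF sL] zL]] a by simp
qed

end

lemma gal_funpow: "\<sigma> \<in> gal f \<Longrightarrow> \<sigma> ^^ k \<in> gal f"
proof (induction k)
  case 0 thus ?case using gal_id by (simp add: id_def)
next
  case (Suc k)
  have "\<sigma> \<circ> \<sigma> ^^ k \<in> gal f" using gal_comp Suc by blast
  thus ?case by (simp only: funpow.simps)
qed

locale gmain = gsetup +
  assumes g1: "g \<ge> 1"
    and ct1: "has_cycle_type P {#2 * g#}"
    and ct2: "has_cycle_type P (add_mset 2 (replicate_mset (2 * g - 2) 1))"
    and ctQ: "\<forall>lam. is_partition g lam \<longrightarrow> has_cycle_type Q lam"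
begin

abbreviation "RR \<equiv> croots P"
abbreviation "TT \<equiv> croots Q"

lemma finR: "finite RR" using croots_finite[OF P0] .
lemma finT: "finite TT" using croots_finite[OF Q0] .

lemma cyc1: "\<exists>\<sigma>\<in>gal P. card RR = 2 * g \<and> (\<forall>x\<in>RR. \<forall>y\<in>RR. \<exists>k. (\<sigma> ^^ k) x = y)"
proof -
  obtain \<sigma> where s: "\<sigma> \<in> gal P" "cycle_type_on \<sigma> RR = {#2 * g#}" using ct1 by (auto simp: has_cycle_type_def)
  have b: "bij_betw \<sigma> RR RR" using gal_croots[OF s(1) P0] .
  show ?thesis using ct_full[OF b finR s(2)] s(1) by blast
qed

lemma cardR: "card RR = 2 * g" using cyc1 by blast

lemma partQ: "is_partition g {#g#}" using g1 by (simp add: is_partition_def)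

lemma cardT: "card TT = g"
proof -
  obtain \<tau> where s: "\<tau> \<in> gal Q" "cycle_type_on \<tau> TT = {#g#}" using ctQ partQ by (auto simp: has_cycle_type_def)
  have b: "bij_betw \<tau> TT TT" using gal_croots[OF s(1) Q0] .
  show ?thesis using ct_full(1)[OF b finT s(2)] .
qed

lemma fzT: "z \<in> RR \<Longrightarrow> fz z \<in> TT" using rootP by blast

lemma fib_card: "card {z\<in>RR. fz z = t} \<le> 2"
proof (cases "{z\<in>RR. fz z = t} = {}")
  case True thus ?thesis by (subst True) simp
next
  case False
  then obtain z where z: "z \<in> RR" "fz z = t" by blast
  have "{z\<in>RR. fz z = t} \<subseteq> {z, cq / z}"
  proof
    fix y assume "y \<in> {z\<in>RR. fz z = t}"
    hence "y \<in> RR" "fz y = fz z" using z by auto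
    thus "y \<in> {z, cq / z}" using fib2[OF z(1)] by auto
  qed
  hence "card {z\<in>RR. fz z = t} \<le> card {z, cq / z}" by (intro card_mono) auto
  also have "\<dots> \<le> 2" by (cases "z = cq / z") simp_all
  finally show ?thesis .
qed

lemma no_fixed_partner: "z \<in> RR \<Longrightarrow> cq / z \<noteq> z"
proof
  assume z: "z \<in> RR" and e: "cq / z = z"
  define t0 where "t0 = fz z"
  have t0: "t0 \<in> TT" using fzT z t0_def by simp
  have f1: "card {y\<in>RR. fz y = t0} \<le> 1"
  proof -
    have "{y\<in>RR. fz y = t0} \<subseteq> {z}"
    proof
      fix y assume "y \<in> {y\<in>RR. fz y = t0}"
      hence "y \<in> RR" "fz y = fz z" using t0_def by auto
      hence "y = z \<or> y = cq / z" using fib2[OF z] by blast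
      thus "y \<in> {z}" using e by auto
    qed
    hence "card {y\<in>RR. fz y = t0} \<le> card {z}" by (intro card_mono) auto
    thus ?thesis by simp
  qed
  have "RR = (\<Union>t\<in>TT. {y\<in>RR. fz y = t})" using fzT by blast
  hence "card RR \<le> (\<Sum>t\<in>TT. card {y\<in>RR. fz y = t})" using card_UN_le[OF finT] by metis
  also have "\<dots> = card {y\<in>RR. fz y = t0} + (\<Sum>t\<in>TT-{t0}. card {y\<in>RR. fz y = t})"
    using sum.remove[OF finT t0] by blast
  also have "\<dots> \<le> 1 + card (TT - {t0}) * 2"
  proof -
    have "(\<Sum>t\<in>TT-{t0}. card {y\<in>RR. fz y = t}) \<le> card (TT - {t0}) * 2"
      using sum_bounded_above[of "TT - {t0}" "\<lambda>t. card {y\<in>RR. fz y = t}" 2] fib_card by simp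
    thus ?thesis using f1 by linarith
  qed
  also have "\<dots> = 1 + (g - 1) * 2" using cardT t0 finT by simp
  finally show False using cardR g1 by simp
qed

lemma transpQ:
  assumes a: "a \<in> TT" and b: "b \<in> TT" and ab: "a \<noteq> b"
  shows "\<exists>h\<in>gal Q. \<forall>z\<in>TT. h z = Transposition.transpose a b z"
proof -
  have g2: "g \<ge> 2"
  proof (rule ccontr)
    assume "\<not> g \<ge> 2" hence "card TT = 1" using cardT g1 by simp
    thus False using a b ab by (metis card_1_singletonE singletonD)
  qed
  have perm: "\<forall>h\<in>gal Q. bij_betw h TT TT" using gal_croots Q0 by blast
  have comp: "\<forall>h\<in>gal Q. \<forall>k\<in>gal Q. h \<circ> k \<in> gal Q" using gal_comp by blast
  have inv: "\<forall>h\<in>gal Q. \<exists>h'\<in>gal Q. \<forall>x\<in>TT. h' (h x) = x" using gal_inv by blast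
  have p1: "is_partition g (add_mset 2 (replicate_mset (g - 2) 1))" using g2
    by (auto simp: is_partition_def in_replicate_mset)
  have p2: "is_partition g {#g - 1, 1#}" using g2 by (auto simp: is_partition_def)
  obtain t where t: "t \<in> gal Q" "cycle_type_on t TT = add_mset 2 (replicate_mset (g - 2) 1)"
    using ctQ p1 by (auto simp: has_cycle_type_def)
  obtain c where c: "c \<in> gal Q" "cycle_type_on c TT = {#g#}"
    using ctQ partQ by (auto simp: has_cycle_type_def)
  obtain d where d: "d \<in> gal Q" "cycle_type_on d TT = {#g - 1, 1#}"
    using ctQ p2 by (auto simp: has_cycle_type_def)
  obtain a0 b0 where ab0: "a0 \<in> TT" "b0 \<in> TT" "a0 \<noteq> b0" "t a0 = b0" "t b0 = a0" "\<forall>x\<in>TT-{a0,b0}. t x = x"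
    using ct_transp[OF perm[rule_format, OF t(1)] finT t(2)] by blast
  have ta: "\<forall>z\<in>TT. t z = Transposition.transpose a0 b0 z"
    using ab0 by (auto simp: transpose_def)
  have cc: "\<forall>x\<in>TT. \<forall>y\<in>TT. \<exists>k. (c ^^ k) x = y" using ct_full(2)[OF perm[rule_format, OF c(1)] finT c(2)] .
  obtain p where p: "p \<in> TT" "d p = p" "\<forall>x\<in>TT-{p}. \<forall>y\<in>TT-{p}. \<exists>k. (d ^^ k) x = y"
    using ct_fix[OF perm[rule_format, OF d(1)] finT d(2)] by blast
  have "\<forall>x\<in>TT. \<forall>y\<in>TT. x \<noteq> y \<longrightarrow> RT (gal Q) TT x y"
    using all_transp[OF finT perm comp inv ab0(1-3) t(1) ta c(1) cc d(1) p] .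
  thus ?thesis using a b ab unfolding RT_def[OF finT perm comp inv] by blast
qed

definition "Hrl \<rho> \<longleftrightarrow> (\<exists>\<sigma>\<in>gal P. \<forall>z\<in>RR. fz (\<sigma> z) = \<rho> (fz z))"

lemma Hrl_all: assumes "\<rho> permutes TT" shows "Hrl \<rho>"
  using assms finT
proof (induction \<rho> rule: permutes_induct)
  case id thus ?case by (auto simp: Hrl_def intro!: bexI[of _ id] gal_id)
next
  case (swap a b p)
  have "Hrl p" using swap by blast
  then obtain \<sigma>p where sp: "\<sigma>p \<in> gal P" "\<forall>z\<in>RR. fz (\<sigma>p z) = p (fz z)" by (auto simp: Hrl_def)
  obtain h where h: "h \<in> gal Q" "\<forall>z\<in>TT. h z = Transposition.transpose a b z" using transpQ swap by blast
  obtain \<sigma>h where sh: "\<sigma>h \<in> gal P" "\<forall>t\<in>TT. \<sigma>h t = h t" using extend[OF h(1)] by blast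
  have "\<forall>z\<in>RR. fz ((\<sigma>h \<circ> \<sigma>p) z) = (Transposition.transpose a b \<circ> p) (fz z)"
  proof
    fix z assume z: "z \<in> RR"
    have pz: "\<sigma>p z \<in> RR" using gal_croots[OF sp(1) P0] z bij_betwE by blast
    have "fz ((\<sigma>h \<circ> \<sigma>p) z) = \<sigma>h (fz (\<sigma>p z))" using gal_partner(2)[OF sh(1) pz] by simp
    also have "\<dots> = h (fz (\<sigma>p z))" using sh(2) fzT[OF pz] by simp
    also have "\<dots> = Transposition.transpose a b (p (fz z))" using h(2) fzT[OF pz] sp(2) z by simp
    finally show "fz ((\<sigma>h \<circ> \<sigma>p) z) = (Transposition.transpose a b \<circ> p) (fz z)" by simp
  qed
  thus ?case using gal_comp[OF sh(1) sp(1)] unfolding Hrl_def by (intro bexI[of _ "\<sigma>h \<circ> \<sigma>p"]) auto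
qed

lemma pair_swap:
  assumes r: "r \<in> RR"
  shows "\<exists>s\<in>gal P. \<forall>z\<in>RR. s z = Transposition.transpose r (cq / r) z"
proof -
  obtain \<sigma>0 where s0: "\<sigma>0 \<in> gal P" "cycle_type_on \<sigma>0 RR = add_mset 2 (replicate_mset (2 * g - 2) 1)"
    using ct2 by (auto simp: has_cycle_type_def)
  have b0: "bij_betw \<sigma>0 RR RR" using gal_croots[OF s0(1) P0] .
  obtain a0 b0 where ab0: "a0 \<in> RR" "b0 \<in> RR" "a0 \<noteq> b0" "\<sigma>0 a0 = b0" "\<sigma>0 b0 = a0" "\<forall>x\<in>RR-{a0,b0}. \<sigma>0 x = x"
    using ct_transp[OF b0 finR s0(2)] by blast
  have ba: "b0 = cq / a0"
  proof (rule ccontr)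
    assume ne: "b0 \<noteq> cq / a0"
    have "cq / a0 \<in> RR" using partner ab0(1) by blast
    moreover have "cq / a0 \<noteq> a0" using no_fixed_partner ab0(1) by blast
    ultimately have "\<sigma>0 (cq / a0) = cq / a0" using ab0(6) ne by auto
    hence "cq / b0 = cq / a0" using gal_partner(1)[OF s0(1) ab0(1)] ab0(4) by simp
    hence "b0 = a0" using cq0 by (simp add: field_simps)
    thus False using ab0(3) by simp
  qed
  obtain \<sigma>1 where s1: "\<sigma>1 \<in> gal P" "\<forall>x\<in>RR. \<forall>y\<in>RR. \<exists>k. (\<sigma>1 ^^ k) x = y" using cyc1 by blast
  obtain k where k: "(\<sigma>1 ^^ k) a0 = r" using s1(2) ab0(1) r by blast
  define h where "h = \<sigma>1 ^^ k"
  have hg: "h \<in> gal P" unfolding h_def by (rule gal_funpow[OF s1(1)])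
  obtain hi where hi: "hi \<in> gal P" "\<forall>x. hi (h x) = x \<and> h (hi x) = x" using gal_inv[OF hg] by blast
  have hb: "bij_betw h RR RR" using gal_croots[OF hg P0] .
  have hib: "bij_betw hi RR RR" using gal_croots[OF hi(1) P0] .
  have ha: "h a0 = r" using k h_def by simp
  have hb0: "h b0 = cq / r" using gal_partner(1)[OF hg ab0(1)] ha ba by simp
  have "\<forall>z\<in>RR. (h \<circ> \<sigma>0 \<circ> hi) z = Transposition.transpose r (cq / r) z"
  proof
    fix z assume z: "z \<in> RR"
    define y where "y = hi z"
    have y: "y \<in> RR" using hib z y_def bij_betwE by blast
    have zy: "z = h y" using hi(2) y_def by simp
    have cz: "(h \<circ> \<sigma>0 \<circ> hi) z = h (\<sigma>0 y)" by (simp add: y_def)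
    show "(h \<circ> \<sigma>0 \<circ> hi) z = Transposition.transpose r (cq / r) z"
    proof (cases "y = a0")
      case True thus ?thesis using cz zy ha hb0 ab0(4) by simp
    next
      case False note ya = this
      show ?thesis
      proof (cases "y = b0")
        case True
        have "cq / r \<noteq> r" using no_fixed_partner r by blast
        thus ?thesis using True cz zy ha hb0 ab0(5) by simp
      next
        case False
        have hinj: "inj_on h RR" using hb by (rule bij_betw_imp_inj_on)
        have "z \<noteq> r" using zy ha ya inj_onD[OF hinj, of y a0] y ab0(1) by auto
        moreover have "z \<noteq> cq / r" using zy hb0 False inj_onD[OF hinj, of y b0] y ab0(2) by auto
        ultimately show ?thesis using ab0(6) y ya False cz zy by simp
      qed
    qed
  qed
  moreover have "h \<circ> \<sigma>0 \<circ> hi \<in> gal P" using gal_comp hg s0(1) hi(1) by blast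
  ultimately show ?thesis by blast
qed

end

context gmain
begin

lemma galR: "\<sigma> \<in> gal P \<Longrightarrow> bij_betw \<sigma> RR RR" using gal_croots[OF _ P0] .

lemma galR_in: "\<sigma> \<in> gal P \<Longrightarrow> z \<in> RR \<Longrightarrow> \<sigma> z \<in> RR" using galR bij_betwE by blast

lemma galR_inj: "\<sigma> \<in> gal P \<Longrightarrow> y \<in> RR \<Longrightarrow> z \<in> RR \<Longrightarrow> \<sigma> y = \<sigma> z \<Longrightarrow> y = z"
  using galR bij_betw_imp_inj_on inj_onD by metis

lemma partner_in: "z \<in> RR \<Longrightarrow> cq / z \<in> RR" using partner by blast
lemma partner_inv: "z \<in> RR \<Longrightarrow> cq / (cq / z) = z" using partner by blast
lemma partner_fz: "z \<in> RR \<Longrightarrow> fz (cq / z) = fz z" using partner by blast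

lemma realize_step:
  assumes pb: "bij_betw \<pi> RR RR" and pc: "\<forall>z\<in>RR. \<pi> (cq / z) = cq / \<pi> z"
  shows "\<forall>\<sigma>\<in>gal P. (\<forall>z\<in>RR. \<pi> z = \<sigma> z \<or> \<pi> z = cq / \<sigma> z) \<longrightarrow> card {z\<in>RR. \<pi> z \<noteq> \<sigma> z} = n
          \<longrightarrow> (\<exists>\<sigma>'\<in>gal P. \<forall>z\<in>RR. \<sigma>' z = \<pi> z)"
proof (induction n rule: less_induct)
  case (less n)
  show ?case
  proof (intro ballI impI)
    fix \<sigma> assume s: "\<sigma> \<in> gal P" and H1: "\<forall>z\<in>RR. \<pi> z = \<sigma> z \<or> \<pi> z = cq / \<sigma> z"
      and cn: "card {z\<in>RR. \<pi> z \<noteq> \<sigma> z} = n"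
    define D where "D = {z\<in>RR. \<pi> z \<noteq> \<sigma> z}"
    show "\<exists>\<sigma>'\<in>gal P. \<forall>z\<in>RR. \<sigma>' z = \<pi> z"
    proof (cases "D = {}")
      case True thus ?thesis using s unfolding D_def by auto
    next
      case False
      then obtain z where z: "z \<in> RR" "\<pi> z \<noteq> \<sigma> z" unfolding D_def by auto
      define a where "a = \<sigma> z"
      have aR: "a \<in> RR" using galR_in[OF s z(1)] a_def by simp
      have pz: "\<pi> z = cq / a" using H1 z a_def by auto
      obtain sw where sw: "sw \<in> gal P" "\<forall>y\<in>RR. sw y = Transposition.transpose a (cq / a) y"
        using pair_swap[OF aR] by blast
      define \<sigma>' where "\<sigma>' = sw \<circ> \<sigma>"
      have s': "\<sigma>' \<in> gal P" unfolding \<sigma>'_def by (rule gal_comp[OF sw(1) s])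
      have ana: "cq / a \<noteq> a" using no_fixed_partner aR by blast
      have sz: "\<sigma> (cq / z) = cq / a" using gal_partner(1)[OF s z(1)] a_def by simp
      have pcz: "\<pi> (cq / z) = a" using pc z(1) pz partner_inv[OF aR] by simp
      have good: "\<pi> y = \<sigma>' y" if y: "y \<in> RR" "\<sigma> y = a \<or> \<sigma> y = cq / a" for y
      proof (cases "\<sigma> y = a")
        case True
        hence "y = z" using galR_inj[OF s y(1) z(1)] a_def by simp
        thus ?thesis using pz sw(2) aR True unfolding \<sigma>'_def by simp
      next
        case False
        hence e: "\<sigma> y = cq / a" using y by simp
        hence "y = cq / z" using galR_inj[OF s y(1) partner_in[OF z(1)]] sz by simp
        thus ?thesis using pcz sw(2) e partner_in[OF aR] ana unfolding \<sigma>'_def by simp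
      qed
      have other: "\<sigma>' y = \<sigma> y" if y: "y \<in> RR" "\<sigma> y \<noteq> a" "\<sigma> y \<noteq> cq / a" for y
        using sw(2) galR_in[OF s y(1)] y unfolding \<sigma>'_def by simp
      have H1': "\<forall>y\<in>RR. \<pi> y = \<sigma>' y \<or> \<pi> y = cq / \<sigma>' y"
      proof
        fix y assume y: "y \<in> RR"
        show "\<pi> y = \<sigma>' y \<or> \<pi> y = cq / \<sigma>' y"
        proof (cases "\<sigma> y = a \<or> \<sigma> y = cq / a")
          case True thus ?thesis using good y by blast
        next
          case False thus ?thesis using other[OF y] H1 y by auto
        qed
      qed
      have sub: "{y\<in>RR. \<pi> y \<noteq> \<sigma>' y} \<subseteq> D - {z}"
      proof
        fix y assume "y \<in> {y\<in>RR. \<pi> y \<noteq> \<sigma>' y}"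
        hence y: "y \<in> RR" "\<pi> y \<noteq> \<sigma>' y" by auto
        hence n: "\<not> (\<sigma> y = a \<or> \<sigma> y = cq / a)" using good by blast
        hence "\<sigma>' y = \<sigma> y" using other y(1) by blast
        moreover have "y \<noteq> z" using n a_def by blast
        ultimately show "y \<in> D - {z}" using y unfolding D_def by auto
      qed
      have fD: "finite D" unfolding D_def using finR by simp
      have zD: "z \<in> D" unfolding D_def using z by simp
      have "card {y\<in>RR. \<pi> y \<noteq> \<sigma>' y} \<le> card (D - {z})" by (rule card_mono[OF _ sub]) (use fD in simp)
      also have "\<dots> < card D" using card_Diff1_less[OF fD zD] .
      finally have lt: "card {y\<in>RR. \<pi> y \<noteq> \<sigma>' y} < n" using cn D_def by simp
      show ?thesis using less.IH[OF lt] s' H1' by blast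
    qed
  qed
qed

lemma realize:
  assumes pb: "bij_betw \<pi> RR RR" and pc: "\<forall>z\<in>RR. \<pi> (cq / z) = cq / \<pi> z"
  shows "\<exists>\<sigma>\<in>gal P. \<forall>z\<in>RR. \<sigma> z = \<pi> z"
proof -
  define rt where "rt t = (SOME z. z \<in> RR \<and> fz z = t)" for t
  have rt: "rt t \<in> RR \<and> fz (rt t) = t" if "t \<in> TT" for t
    unfolding rt_def using fiber[OF that] by (metis (mono_tags, lifting) someI_ex)
  define \<rho> where "\<rho> t = (if t \<in> TT then fz (\<pi> (rt t)) else t)" for t
  have pR: "\<pi> z \<in> RR" if "z \<in> RR" for z using pb that bij_betwE by blast
  have piinj: "y = z" if "y \<in> RR" "z \<in> RR" "\<pi> y = \<pi> z" for y z
    using pb that bij_betw_imp_inj_on inj_onD by metis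
  have wd: "\<rho> (fz z) = fz (\<pi> z)" if z: "z \<in> RR" for z
  proof -
    have t: "fz z \<in> TT" using fzT z by simp
    obtain z' where z': "z' = rt (fz z)" by simp
    have z'R: "z' \<in> RR" and fz': "fz z' = fz z" using rt[OF t] z' by auto
    have "z' = z \<or> z' = cq / z" using fib2[OF z z'R fz'] .
    moreover have "fz (\<pi> (cq / z)) = fz (\<pi> z)" using pc z partner_fz[OF pR[OF z]] by simp
    ultimately have "fz (\<pi> z') = fz (\<pi> z)" by auto
    thus ?thesis unfolding \<rho>_def using t z' by simp
  qed
  have rT: "\<rho> t \<in> TT" if "t \<in> TT" for t
    using that rt wd fzT pR by metis
  have rinj: "inj_on \<rho> TT"
  proof (rule inj_onI)
    fix t1 t2 assume t1: "t1 \<in> TT" and t2: "t2 \<in> TT" and e: "\<rho> t1 = \<rho> t2"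
    obtain z1 where z1: "z1 \<in> RR" "fz z1 = t1" using fiber t1 by blast
    obtain z2 where z2: "z2 \<in> RR" "fz z2 = t2" using fiber t2 by blast
    have "fz (\<pi> z2) = fz (\<pi> z1)" using e wd z1 z2 by metis
    hence "\<pi> z2 = \<pi> z1 \<or> \<pi> z2 = cq / \<pi> z1" using fib2 pR z1(1) z2(1) by blast
    hence "\<pi> z2 = \<pi> z1 \<or> \<pi> z2 = \<pi> (cq / z1)" using pc z1(1) by simp
    hence "z2 = z1 \<or> z2 = cq / z1" using piinj z1(1) z2(1) partner_in[OF z1(1)] by blast
    thus "t1 = t2" using z1 z2 partner_fz by auto
  qed
  have "\<rho> ` TT = TT" by (rule endo_inj_surj[OF finT _ rinj]) (use rT in auto)
  hence "bij_betw \<rho> TT TT" using rinj by (simp add: bij_betw_def)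
  hence "\<rho> permutes TT" by (rule bij_imp_permutes) (simp add: \<rho>_def)
  then obtain \<sigma>1 where s1: "\<sigma>1 \<in> gal P" "\<forall>z\<in>RR. fz (\<sigma>1 z) = \<rho> (fz z)"
    using Hrl_all by (auto simp: Hrl_def)
  have H1: "\<forall>z\<in>RR. \<pi> z = \<sigma>1 z \<or> \<pi> z = cq / \<sigma>1 z"
  proof
    fix z assume z: "z \<in> RR"
    have "fz (\<pi> z) = fz (\<sigma>1 z)" using s1(2) wd z by simp
    thus "\<pi> z = \<sigma>1 z \<or> \<pi> z = cq / \<sigma>1 z" using fib2 galR_in[OF s1(1) z] pR[OF z] by blast
  qed
  show ?thesis using realize_step[OF pb pc] s1(1) H1 by blast
qed

end

definition kk :: "nat \<Rightarrow> nat" where "kk i = (i + 1) div 2"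
definition pr :: "nat \<Rightarrow> nat" where "pr i = (if odd i then i + 1 else i - 1)"

lemma kk_range: "i \<in> {1..2*g} \<Longrightarrow> kk i \<in> {1..g}"
  unfolding kk_def by (auto; presburger)
lemma pr_range: "i \<in> {1..2*g} \<Longrightarrow> pr i \<in> {1..2*(g::nat)}"
  unfolding pr_def by (auto; presburger)
lemma pr_pr: "i \<ge> 1 \<Longrightarrow> pr (pr i) = i"
  unfolding pr_def by (auto; presburger)
lemma pr_ne: "i \<ge> 1 \<Longrightarrow> pr i \<noteq> i"
  unfolding pr_def by (auto; presburger)
lemma kk_pr: "i \<ge> 1 \<Longrightarrow> kk (pr i) = kk i"
  unfolding pr_def kk_def by (auto; presburger)
lemma odd_pr: "i \<ge> 1 \<Longrightarrow> odd (pr i) = even i"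
  unfolding pr_def by (auto; presburger)
lemma kk_par_eq: "kk i = kk j \<Longrightarrow> odd i = odd j \<Longrightarrow> i = j"
  unfolding kk_def by presburger

lemma pairs_mem: "i \<in> {1..2*g} \<Longrightarrow> {i, pr i} \<in> pairs2 g"
proof -
  assume i: "i \<in> {1..2*g}"
  show ?thesis
  proof (cases "odd i")
    case True
    then obtain m where m: "i = 2*m + 1" by (metis oddE)
    have "pr i = 2*m + 2" using True m unfolding pr_def by simp
    hence "{i, pr i} = {2 * (m+1) - 1, 2 * (m+1)}" using m by simp
    moreover have "1 \<le> m + 1 \<and> m + 1 \<le> g" using i m by auto
    ultimately show ?thesis unfolding pairs2_def by blast
  next
    case False
    then obtain m where m: "i = 2*m" by (metis evenE)
    have m1: "m \<ge> 1" using i m by simp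
    have "pr i = 2*m - 1" using False m unfolding pr_def by simp
    hence "{i, pr i} = {2 * m - 1, 2 * m}" using m by auto
    moreover have "1 \<le> m \<and> m \<le> g" using i m m1 by auto
    ultimately show ?thesis unfolding pairs2_def by blast
  qed
qed

lemma pr_odd: "k \<ge> 1 \<Longrightarrow> pr (2*k - 1) = 2*k"
proof -
  assume k: "k \<ge> 1"
  have o: "odd (2*k - 1)" using k by presburger
  thus ?thesis using k unfolding pr_def by simp
qed

lemma pr_even: "k \<ge> 1 \<Longrightarrow> pr (2*k) = 2*k - 1"
  unfolding pr_def by simp

lemma pairs_cases: "p \<in> pairs2 g \<Longrightarrow> \<exists>i\<in>{1..2*g}. p = {i, pr i}"
proof -
  assume "p \<in> pairs2 g"
  then obtain k where k: "p = {2*k - 1, 2*k}" "1 \<le> k" "k \<le> g" unfolding pairs2_def by blast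
  have "pr (2*k - 1) = 2*k" using pr_odd k(2) .
  moreover have "2*k - 1 \<in> {1..2*g}" using k by auto
  ultimately show ?thesis using k by metis
qed

lemma pairs_uniq: "p \<in> pairs2 g \<Longrightarrow> i \<in> p \<Longrightarrow> p = {i, pr i}"
proof -
  assume "p \<in> pairs2 g" "i \<in> p"
  then obtain k where k: "p = {2*k - 1, 2*k}" "1 \<le> k" "k \<le> g" "i \<in> p" unfolding pairs2_def by blast
  have "pr (2*k - 1) = 2*k" "pr (2*k) = 2*k - 1" using pr_odd pr_even k(2) by auto
  thus ?thesis using k by auto
qed

lemma W_char: "\<pi> \<in> W g \<longleftrightarrow> \<pi> permutes {1..2*g} \<and> (\<forall>i\<in>{1..2*g}. \<pi> (pr i) = pr (\<pi> i))"
proof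
  assume w: "\<pi> \<in> W g"
  have pm: "\<pi> permutes {1..2*g}" using w unfolding W_def by simp
  have pp: "\<forall>p\<in>pairs2 g. \<pi> ` p \<in> pairs2 g" using w unfolding W_def by simp
  have "\<pi> (pr i) = pr (\<pi> i)" if i: "i \<in> {1..2*g}" for i
  proof -
    have "\<pi> ` {i, pr i} \<in> pairs2 g" using pp pairs_mem[OF i] by blast
    moreover have "\<pi> i \<in> \<pi> ` {i, pr i}" by simp
    ultimately have eqp: "\<pi> ` {i, pr i} = {\<pi> i, pr (\<pi> i)}" by (rule pairs_uniq)
    have hh: "\<pi> (pr i) \<in> \<pi> ` {i, pr i}" by simp
    have "\<pi> (pr i) \<in> {\<pi> i, pr (\<pi> i)}" using hh eqp by (simp only:)
    moreover have "\<pi> (pr i) \<noteq> \<pi> i"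
    proof
      assume "\<pi> (pr i) = \<pi> i"
      hence "pr i = i" using injD[OF permutes_inj[OF pm]] by blast
      thus False using pr_ne[of i] i by simp
    qed
    ultimately show ?thesis by simp
  qed
  thus "\<pi> permutes {1..2*g} \<and> (\<forall>i\<in>{1..2*g}. \<pi> (pr i) = pr (\<pi> i))" using pm by blast
next
  assume a: "\<pi> permutes {1..2*g} \<and> (\<forall>i\<in>{1..2*g}. \<pi> (pr i) = pr (\<pi> i))"
  have "\<pi> ` p \<in> pairs2 g" if p: "p \<in> pairs2 g" for p
  proof -
    obtain i where i: "i \<in> {1..2*g}" "p = {i, pr i}" using pairs_cases p by blast
    have "\<pi> i \<in> {1..2*g}" using permutes_in_image[of \<pi> "{1..2*g}" i] a i(1) by simp
    hence "{\<pi> i, pr (\<pi> i)} \<in> pairs2 g" by (rule pairs_mem)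
    moreover have "\<pi> (pr i) = pr (\<pi> i)" using a i(1) by blast
    hence "\<pi> ` p = {\<pi> i, pr (\<pi> i)}" using i(2) by simp
    ultimately show ?thesis by simp
  qed
  thus "\<pi> \<in> W g" using a unfolding W_def by blast
qed

context gmain
begin

definition "tt = (SOME h. bij_betw h {1..g} TT)"
definition "rt t = (SOME z. z \<in> RR \<and> fz z = t)"
definition "ee i = (if odd i then rt (tt (kk i)) else cq / rt (tt (kk i)))"
definition "ei = inv_into {1..2*g} ee"

lemma tt_bij: "bij_betw tt {1..g} TT"
proof -
  have "\<exists>h. bij_betw h {1..g} TT" using ex_bij_betw_nat_finite_1[OF finT] cardT by simp
  thus ?thesis unfolding tt_def by (rule someI_ex)
qed

lemma tt_in: "k \<in> {1..g} \<Longrightarrow> tt k \<in> TT" using tt_bij bij_betwE by blast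

lemma rt_prop: "t \<in> TT \<Longrightarrow> rt t \<in> RR \<and> fz (rt t) = t"
  unfolding rt_def using fiber by (metis (mono_tags, lifting) someI_ex)

lemma ee_R: "i \<in> {1..2*g} \<Longrightarrow> ee i \<in> RR"
  using rt_prop[OF tt_in[OF kk_range]] partner_in unfolding ee_def by auto

lemma fz_ee: "i \<in> {1..2*g} \<Longrightarrow> fz (ee i) = tt (kk i)"
  using rt_prop[OF tt_in[OF kk_range]] partner_fz unfolding ee_def by auto

lemma ee_pr: "i \<in> {1..2*g} \<Longrightarrow> ee (pr i) = cq / ee i"
proof -
  assume i: "i \<in> {1..2*g}"
  have i1: "i \<ge> 1" using i by simp
  have rR: "rt (tt (kk i)) \<in> RR" using rt_prop[OF tt_in[OF kk_range[OF i]]] by blast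
  show ?thesis
  proof (cases "odd i")
    case True
    hence "even (pr i)" using odd_pr[OF i1] by simp
    thus ?thesis using True kk_pr[OF i1] unfolding ee_def by simp
  next
    case False
    hence "odd (pr i)" using odd_pr[OF i1] by simp
    thus ?thesis using False kk_pr[OF i1] partner_inv[OF rR] unfolding ee_def by simp
  qed
qed

lemma ee_inj: "inj_on ee {1..2*g}"
proof (rule inj_onI)
  fix i j assume i: "i \<in> {1..2*g}" and j: "j \<in> {1..2*g}" and e: "ee i = ee j"
  have "tt (kk i) = tt (kk j)" using fz_ee[OF i] fz_ee[OF j] e by simp
  hence k: "kk i = kk j" using tt_bij kk_range[OF i] kk_range[OF j] by (metis bij_betw_imp_inj_on inj_onD)
  have rR: "rt (tt (kk i)) \<in> RR" using rt_prop[OF tt_in[OF kk_range[OF i]]] by blast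
  have nf: "cq / rt (tt (kk i)) \<noteq> rt (tt (kk i))" using no_fixed_partner[OF rR] .
  have "odd i = odd j"
  proof (rule ccontr)
    assume "odd i \<noteq> odd j"
    hence "rt (tt (kk i)) = cq / rt (tt (kk i)) \<or> cq / rt (tt (kk i)) = rt (tt (kk i))"
      using e k unfolding ee_def by (auto split: if_splits)
    thus False using nf by metis
  qed
  thus "i = j" using kk_par_eq k by blast
qed

lemma ee_surj: "z \<in> RR \<Longrightarrow> \<exists>i\<in>{1..2*g}. ee i = z"
proof -
  assume z: "z \<in> RR"
  have "fz z \<in> TT" using fzT z by simp
  then obtain k where k: "k \<in> {1..g}" "tt k = fz z" using tt_bij by (metis bij_betw_def imageE)
  define z' where "z' = rt (tt k)"
  have z': "z' \<in> RR" "fz z' = fz z" using rt_prop[OF tt_in[OF k(1)]] k z'_def by auto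
  have zz: "z = z' \<or> z = cq / z'" using fib2[OF z' (1) z z'(2)[symmetric]] .
  have k1: "kk (2*k - 1) = k" "kk (2*k) = k" "odd (2*k - 1)" using k unfolding kk_def by (auto; presburger)+
  have r1: "2*k - 1 \<in> {1..2*g}" "2*k \<in> {1..2*g}" using k by auto
  have "ee (2*k - 1) = z'" "ee (2*k) = cq / z'" using k1 z'_def unfolding ee_def by auto
  thus ?thesis using zz r1 by metis
qed

lemma ee_bij: "bij_betw ee {1..2*g} RR"
  unfolding bij_betw_def using ee_inj ee_R ee_surj by blast

lemma ei_prop: "y \<in> RR \<Longrightarrow> ei y \<in> {1..2*g} \<and> ee (ei y) = y"
  unfolding ei_def using ee_bij by (metis bij_betw_def inv_into_into f_inv_into_f)

lemma ei_ee: "i \<in> {1..2*g} \<Longrightarrow> ei (ee i) = i"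
  unfolding ei_def using ee_inj by (simp add: inv_into_f_f)

definition "Phi \<sigma> i = (if i \<in> {1..2*g} then ei (\<sigma> (ee i)) else i)"

lemma Phi_out: "i \<notin> {1..2*g} \<Longrightarrow> Phi \<sigma> i = i"
  unfolding Phi_def by (rule if_not_P)

lemma Phi_in: "\<sigma> \<in> gal P \<Longrightarrow> i \<in> {1..2*g} \<Longrightarrow> Phi \<sigma> i \<in> {1..2*g} \<and> ee (Phi \<sigma> i) = \<sigma> (ee i)"
  unfolding Phi_def using ei_prop galR_in ee_R by simp

lemma Phi_W: "\<sigma> \<in> gal P \<Longrightarrow> Phi \<sigma> \<in> W g"
proof -
  assume s: "\<sigma> \<in> gal P"
  have inj: "inj_on (Phi \<sigma>) {1..2*g}"
  proof (rule inj_onI)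
    fix i j assume i: "i \<in> {1..2*g}" and j: "j \<in> {1..2*g}" and e: "Phi \<sigma> i = Phi \<sigma> j"
    have "\<sigma> (ee i) = \<sigma> (ee j)" using Phi_in[OF s i] Phi_in[OF s j] e by metis
    hence "ee i = ee j" using galR_inj[OF s ee_R[OF i] ee_R[OF j]] by simp
    thus "i = j" using ee_inj i j inj_onD by metis
  qed
  have "Phi \<sigma> ` {1..2*g} = {1..2*g}"
    by (rule endo_inj_surj[OF _ _ inj]) (use Phi_in[OF s] in auto)
  hence b: "bij_betw (Phi \<sigma>) {1..2*g} {1..2*g}" using inj by (simp add: bij_betw_def)
  have pm: "Phi \<sigma> permutes {1..2*g}" by (rule bij_imp_permutes[OF b]) (rule Phi_out)
  have "Phi \<sigma> (pr i) = pr (Phi \<sigma> i)" if i: "i \<in> {1..2*g}" for i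
  proof -
    define m where "m = Phi \<sigma> i"
    have m: "m \<in> {1..2*g}" "ee m = \<sigma> (ee i)" using Phi_in[OF s i] m_def by auto
    have pri: "pr i \<in> {1..2*g}" using pr_range[OF i] .
    have "Phi \<sigma> (pr i) = ei (\<sigma> (ee (pr i)))" using pri by (simp add: Phi_def)
    also have "\<dots> = ei (\<sigma> (cq / ee i))" using ee_pr[OF i] by simp
    also have "\<dots> = ei (cq / \<sigma> (ee i))" using gal_partner(1)[OF s ee_R[OF i]] by simp
    also have "\<dots> = ei (ee (pr m))" using ee_pr[OF m(1)] m(2) by simp
    also have "\<dots> = pr m" using ei_ee pr_range[OF m(1)] by simp
    finally show ?thesis using m_def by simp
  qed
  thus ?thesis using pm W_char by blast
qed

lemma Phi_hom: "\<sigma> \<in> gal P \<Longrightarrow> \<tau> \<in> gal P \<Longrightarrow> Phi (\<sigma> \<circ> \<tau>) = Phi \<sigma> \<circ> Phi \<tau>"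
proof
  fix i assume s: "\<sigma> \<in> gal P" and t: "\<tau> \<in> gal P"
  show "Phi (\<sigma> \<circ> \<tau>) i = (Phi \<sigma> \<circ> Phi \<tau>) i"
  proof (cases "i \<in> {1..2*g}")
    case True
    have a: "Phi \<tau> i \<in> {1..2*g}" "ee (Phi \<tau> i) = \<tau> (ee i)" using Phi_in[OF t True] by auto
    have "(Phi \<sigma> \<circ> Phi \<tau>) i = ei (\<sigma> (ee (Phi \<tau> i)))" using a(1) by (simp add: Phi_def)
    also have "\<dots> = ei (\<sigma> (\<tau> (ee i)))" using a(2) by simp
    also have "\<dots> = Phi (\<sigma> \<circ> \<tau>) i" using True by (simp add: Phi_def)
    finally show ?thesis by simp
  next
    case False thus ?thesis using Phi_out[OF False] by simp
  qed
qed

lemma Phi_inj: "inj_on Phi (gal P)"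
proof (rule inj_onI)
  fix \<sigma> \<tau> assume s: "\<sigma> \<in> gal P" and t: "\<tau> \<in> gal P" and e: "Phi \<sigma> = Phi \<tau>"
  have "\<forall>z\<in>RR. \<sigma> z = \<tau> z"
  proof
    fix z assume z: "z \<in> RR"
    obtain i where i: "i \<in> {1..2*g}" "ee i = z" using ee_surj z by blast
    have "ee (Phi \<sigma> i) = ee (Phi \<tau> i)" using e by simp
    thus "\<sigma> z = \<tau> z" using Phi_in[OF s i(1)] Phi_in[OF t i(1)] i(2) by simp
  qed
  thus "\<sigma> = \<tau>" using gal_eq[OF s t] by blast
qed

lemma Phi_surj: "\<pi> \<in> W g \<Longrightarrow> \<exists>\<sigma>\<in>gal P. Phi \<sigma> = \<pi>"
proof -
  assume w: "\<pi> \<in> W g"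
  have pm: "\<pi> permutes {1..2*g}" and pc: "\<forall>i\<in>{1..2*g}. \<pi> (pr i) = pr (\<pi> i)" using w W_char by auto
  have pin: "\<pi> i \<in> {1..2*g}" if "i \<in> {1..2*g}" for i using permutes_in_image[OF pm] that by simp
  define \<pi>' where "\<pi>' z = ee (\<pi> (ei z))" for z
  have b1: "bij_betw ei RR {1..2*g}" unfolding ei_def by (rule bij_betw_inv_into[OF ee_bij])
  have b2: "bij_betw \<pi> {1..2*g} {1..2*g}" using permutes_imp_bij[OF pm] .
  have b: "bij_betw \<pi>' RR RR" unfolding \<pi>'_def
    using bij_betw_trans[OF bij_betw_trans[OF b1 b2] ee_bij] by (simp add: comp_def)
  have c: "\<forall>z\<in>RR. \<pi>' (cq / z) = cq / \<pi>' z"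
  proof
    fix z assume z: "z \<in> RR"
    define i where "i = ei z"
    have i: "i \<in> {1..2*g}" "ee i = z" using ei_prop[OF z] i_def by auto
    have "ei (cq / z) = pr i" using ee_pr[OF i(1)] i(2) ei_ee[OF pr_range[OF i(1)]] by simp
    hence "\<pi>' (cq / z) = ee (pr (\<pi> i))" unfolding \<pi>'_def using pc i(1) by simp
    also have "\<dots> = cq / ee (\<pi> i)" using ee_pr[OF pin[OF i(1)]] .
    also have "\<dots> = cq / \<pi>' z" unfolding \<pi>'_def i_def ..
    finally show "\<pi>' (cq / z) = cq / \<pi>' z" .
  qed
  obtain \<sigma> where s: "\<sigma> \<in> gal P" "\<forall>z\<in>RR. \<sigma> z = \<pi>' z" using realize[OF b c] by blast
  have "Phi \<sigma> = \<pi>"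
  proof
    fix i show "Phi \<sigma> i = \<pi> i"
    proof (cases "i \<in> {1..2*g}")
      case True
      have "Phi \<sigma> i = ei (\<pi>' (ee i))" using True s(2) ee_R by (simp add: Phi_def)
      also have "\<dots> = \<pi> i" unfolding \<pi>'_def using ei_ee True pin by simp
      finally show ?thesis .
    next
      case False thus ?thesis using pm Phi_out[OF False] by (simp add: permutes_not_in)
    qed
  qed
  thus ?thesis using s(1) by blast
qed

lemma iso: "group_iso_fun (gal P) (W g)"
proof -
  have "Phi ` gal P = W g" using Phi_W Phi_surj by blast
  hence "bij_betw Phi (gal P) (W g)" using Phi_inj by (simp add: bij_betw_def)
  thus ?thesis unfolding group_iso_fun_def using Phi_hom by blast
qed

end

theorem lemma6p5:
  fixes P Q :: "int poly" and q g :: nat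
  assumes q_pp: "\<exists>p k. prime p \<and> k \<ge> 1 \<and> q = p ^ k"
    and g1: "g \<ge> 1"
    and monic: "lead_coeff P = 1" and degP: "degree P = 2 * g"
    and weil: "\<forall>z\<in>croots P. cmod z = sqrt (real q)"
    and PQ: "\<forall>x::complex. x \<noteq> 0 \<longrightarrow>
               poly (map_poly of_int P) x = x ^ g * poly (map_poly of_int Q) (x + of_nat q / x)"
    and ct1: "has_cycle_type P {#2 * g#}"
    and ct2: "has_cycle_type P (add_mset 2 (replicate_mset (2 * g - 2) 1))"
    and ctQ: "\<forall>lam. is_partition g lam \<longrightarrow> has_cycle_type Q lam"
  shows "group_iso_fun (gal P) (W g)"
proof -
  obtain p k where pk: "prime p" "q = p ^ k" using q_pp by blast
  have q0: "q > 0" using pk prime_gt_0_nat by simp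
  have P0: "P \<noteq> 0" using monic by auto
  have "is_partition g {#g#}" using g1 by (simp add: is_partition_def)
  hence "separable_int Q" using ctQ by (simp add: has_cycle_type_def)
  hence Q0: "Q \<noteq> 0" by (simp add: separable_int_def)
  have noz: "0 \<notin> croots P"
  proof
    assume "0 \<in> croots P"
    hence "cmod 0 = sqrt (real q)" using weil by blast
    thus False using q0 by simp
  qed
  interpret G: gmain P Q q g
    by unfold_locales (rule q0 P0 Q0 noz PQ g1 ct1 ct2 ctQ)+
  show ?thesis by (rule G.iso)
qed

end
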